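(* Let $F_X$ and $F_Y$ be continuous cdfs and for each $n$ let $X_1,\dots,X_n$ be an i.i.d. sample from $F_X$ and $Y_1,\dots,Y_n$ an i.i.d. sample from $F_Y$, the two samples independent. Let $(\gamma_n)$ be $[0,1]$-valued with $|\gamma_n-\gamma|=O(1/n)$ for some $\gamma\in[0,1]$, and write $k_n=1+[(n-1)\gamma_n]$. If $\operatorname{dist}(\gamma,A_0)>0$ then $\liminf_{n\to\infty}P(X_{k_n:n}\le Y_{k_n:n})\ge 1/2$ (i.e. $X_{k_n:n}\le_{\textnormal{asp}}Y_{k_n:n}$). If $\operatorname{dist}(\gamma,A_2)>0$ then $\lim_{n\to\infty}P(X_{k_n:n}\le Y_{k_n:n})=1/2$ (i.e. $X_{k_n:n}=_{\textnormal{asp}}Y_{k_n:n}$).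
   Context: $F^{-1}(u)=\inf\{x:F(x)\ge u\}$. $A_0=\{u\in(0,1):F_X^{-1}(u)>F_Y^{-1}(u)\}$, $A_2=\{u\in(0,1):F_X^{-1}(u)\neq F_Y^{-1}(u)\}$. $\operatorname{dist}(x,A)=\inf\{|x-y|:y\in A\}$ (with $\inf\emptyset=+\infty$). $X_{k:n}$ denotes the $k$-th smallest among $X_1,\dots,X_n$; $[x]$ is the integer part. *)

theory Defs
  imports "HOL-Probability.Probability" "HOL-Library.Landau_Symbols"
begin

definition quantile :: "(real \<Rightarrow> real) \<Rightarrow> real \<Rightarrow> real" where
  "quantile F u = Inf {x. u \<le> F x}"

text \<open>k-th smallest (1-indexed) among x 0, ..., x (n-1).\<close>
definition order_stat :: "(nat \<Rightarrow> real) \<Rightarrow> nat \<Rightarrow> nat \<Rightarrow> real" where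
  "order_stat x n k = sort (map x [0..<n]) ! (k - 1)"

definition A0 :: "(real \<Rightarrow> real) \<Rightarrow> (real \<Rightarrow> real) \<Rightarrow> real set" where
  "A0 FX FY = {u \<in> {0<..<1}. quantile FX u > quantile FY u}"

definition A2 :: "(real \<Rightarrow> real) \<Rightarrow> (real \<Rightarrow> real) \<Rightarrow> real set" where
  "A2 FX FY = {u \<in> {0<..<1}. quantile FX u \<noteq> quantile FY u}"

text \<open>dist(x, A) > 0 with the convention inf of empty set = +infinity.\<close>
definition dist_pos :: "real \<Rightarrow> real set \<Rightarrow> bool" where
  "dist_pos x A \<longleftrightarrow> A = {} \<or> infdist x A > 0"

end

theory Submission
  imports Defs
begin

lemma sorted_nth_le_iff:
  fixes s :: "real list"
  assumes "sorted s" "j < length s"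
  shows "s ! j \<le> t \<longleftrightarrow> j < length (filter (\<lambda>y. y \<le> t) s)"
  using assms
proof (induction s arbitrary: j)
  case Nil then show ?case by simp
next
  case (Cons x s)
  have allge: "\<forall>y\<in>set s. x \<le> y" using Cons.prems(1) by simp
  show ?case
  proof (cases j)
    case 0
    show ?thesis
    proof (cases "x \<le> t")
      case True then show ?thesis using 0 by simp
    next
      case False
      then have "filter (\<lambda>y. y \<le> t) s = []" using allge by (auto simp: filter_empty_conv)
      then show ?thesis using 0 False by simp
    qed
  next
    case (Suc j')
    have IH: "s ! j' \<le> t \<longleftrightarrow> j' < length (filter (\<lambda>y. y \<le> t) s)"
      using Cons.IH[of j'] Cons.prems Suc by simp
    show ?thesis
    proof (cases "x \<le> t")
      case True then show ?thesis using Suc IH by simp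
    next
      case False
      then have "filter (\<lambda>y. y \<le> t) s = []" using allge by (auto simp: filter_empty_conv)
      moreover have "s ! j' \<in> set s" using Cons.prems(2) Suc by simp
      then have "s ! j' > t" using allge False by force
      ultimately show ?thesis using Suc False by simp
    qed
  qed
qed

lemma os_le_iff:
  assumes "1 \<le> k" "k \<le> n"
  shows "order_stat x n k \<le> t \<longleftrightarrow> k \<le> card {i. i < n \<and> x i \<le> t}"
proof -
  let ?s = "sort (map x [0..<n])"
  have "order_stat x n k \<le> t \<longleftrightarrow> k - 1 < length (filter (\<lambda>y. y \<le> t) ?s)"
    unfolding order_stat_def using assms by (intro sorted_nth_le_iff) auto
  also have "length (filter (\<lambda>y. y \<le> t) ?s) = length (filter (\<lambda>y. y \<le> t) (map x [0..<n]))"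
  proof -
    have "mset (filter (\<lambda>y. y \<le> t) ?s) = mset (filter (\<lambda>y. y \<le> t) (map x [0..<n]))" by simp
    then show ?thesis by (metis size_mset)
  qed
  also have "\<dots> = card {i. i < n \<and> x i \<le> t}"
    unfolding length_filter_conv_card by (rule arg_cong[where f=card]) auto
  finally show ?thesis using assms by linarith
qed

lemma os_in:
  assumes "1 \<le> k" "k \<le> n"
  shows "\<exists>i<n. order_stat x n k = x i"
proof -
  have "order_stat x n k \<in> set (sort (map x [0..<n]))"
    unfolding order_stat_def using assms by (intro nth_mem) auto
  then show ?thesis by auto
qed

lemma os_cong:
  assumes "\<And>i. i < n \<Longrightarrow> x i = y i"
  shows "order_stat x n k = order_stat y n k"
proof -
  have e: "map x [0..<n] = map y [0..<n]" by (rule map_cong) (auto simp: assms)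
  show ?thesis unfolding order_stat_def e ..
qed

lemma os_mono:
  assumes "mono f" "1 \<le> k" "k \<le> n"
  shows "order_stat (\<lambda>i. f (x i)) n k = f (order_stat x n k)"
proof -
  have "sort (map (\<lambda>i. f (x i)) [0..<n]) = map f (sort (map x [0..<n]))"
  proof (rule properties_for_sort)
    show "mset (map f (sort (map x [0..<n]))) = mset (map (\<lambda>i. f (x i)) [0..<n])"
    proof -
      have "map (\<lambda>i. f (x i)) [0..<n] = map f (map x [0..<n])" by simp
      then show ?thesis by (simp only: mset_map mset_sort)
    qed
    show "sorted (map f (sort (map x [0..<n])))"
    proof -
      have "sorted_wrt (\<le>) (sort (map x [0..<n]))" by simp
      then have "sorted_wrt (\<lambda>a b. f a \<le> f b) (sort (map x [0..<n]))"
        by (rule sorted_wrt_mono_rel[rotated]) (auto intro: monoD assms(1))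
      then show ?thesis by (simp add: sorted_map)
    qed
  qed
  then show ?thesis unfolding order_stat_def using assms by simp
qed

lemma card_sum_if: fixes n :: nat shows "real (card {i. i < n \<and> P i}) = (\<Sum>i<n. if P i then 1 else 0)"
proof -
  have "(\<Sum>i<n. if P i then 1 else (0::real)) = real (card ({..<n} \<inter> {i. P i}))"
    using sum.inter_restrict[of "{..<n}" "\<lambda>_. 1::real" "{i. P i}"] by simp
  moreover have "{..<n} \<inter> {i. P i} = {i. i < n \<and> P i}" by auto
  ultimately show ?thesis by simp
qed

lemma borel_measurable_os:
  assumes f: "\<And>i. i < n \<Longrightarrow> f i \<in> borel_measurable N" and k: "1 \<le> k" "k \<le> n"
  shows "(\<lambda>\<omega>. order_stat (\<lambda>i. f i \<omega>) n k) \<in> borel_measurable N"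
proof (rule borel_measurable_iff_le[THEN iffD2], intro allI)
  fix t
  have g: "(\<lambda>\<omega>. \<Sum>i<n. if f i \<omega> \<le> t then 1 else (0::real)) \<in> borel_measurable N"
  proof (rule borel_measurable_sum)
    fix i assume "i \<in> {..<n}"
    then have [measurable]: "f i \<in> borel_measurable N" using f by auto
    show "(\<lambda>\<omega>. if f i \<omega> \<le> t then 1 else (0::real)) \<in> borel_measurable N" by measurable
  qed
  have "{\<omega> \<in> space N. order_stat (\<lambda>i. f i \<omega>) n k \<le> t} =
        {\<omega> \<in> space N. real k \<le> (\<Sum>i<n. if f i \<omega> \<le> t then 1 else (0::real))}"
    by (simp add: os_le_iff[OF k] flip: card_sum_if)
  also have "\<dots> \<in> sets N" using g by measurable
  finally show "{\<omega> \<in> space N. order_stat (\<lambda>i. f i \<omega>) n k \<le> t} \<in> sets N" .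
qed

lemma measure_cdf_le:
  assumes D: "real_distribution D" and cont: "continuous_on UNIV (cdf D)"
  shows "measure D {x. cdf D x \<le> t} = max 0 (min 1 t)"
proof -
  interpret real_distribution D by fact
  let ?F = "cdf D"
  have mono: "\<And>x y. x \<le> y \<Longrightarrow> ?F x \<le> ?F y" by (rule cdf_nondecreasing)
  have mid: "measure D {x. ?F x \<le> t} = t" if t: "0 < t" "t < 1" for t
  proof -
    have "eventually (\<lambda>x. ?F x < t) at_bot"
      using cdf_lim_at_bot t(1) by (rule order_tendstoD)
    then obtain a where a: "?F a < t" by (auto simp: eventually_at_bot_linorder)
    have "eventually (\<lambda>x. ?F x > t) at_top"
      using cdf_lim_at_top_prob t(2) by (rule order_tendstoD)
    then obtain b where b: "?F b > t" by (auto simp: eventually_at_top_linorder)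
    have ab: "a \<le> b"
    proof (rule ccontr)
      assume "\<not> a \<le> b"
      then have "?F b \<le> ?F a" using mono[of b a] by simp
      then show False using a b by simp
    qed
    have cab: "continuous_on {a..b} ?F" using continuous_on_subset[OF cont] by blast
    obtain x0 where x0: "?F x0 = t"
      using IVT'[of ?F a t b, OF _ _ ab cab] a b by auto
    let ?S = "{x. ?F x \<le> t}"
    have bdd: "bdd_above ?S"
    proof (rule bdd_aboveI[of _ b])
      fix x assume "x \<in> ?S"
      then have "?F x \<le> t" by simp
      show "x \<le> b"
      proof (rule ccontr)
        assume "\<not> x \<le> b"
        then have "?F b \<le> ?F x" using mono[of b x] by simp
        then show False using \<open>?F x \<le> t\<close> b by simp
      qed
    qed
    have cl: "closed ?S" by (rule closed_Collect_le[OF cont continuous_on_const])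
    have ne: "?S \<noteq> {}" using x0 by auto
    define s where "s = Sup ?S"
    have sS: "s \<in> ?S" unfolding s_def by (rule closed_contains_Sup[OF ne bdd cl])
    have Seq: "?S = {..s}"
    proof
      show "?S \<subseteq> {..s}"
      proof
        fix x assume "x \<in> ?S" then show "x \<in> {..s}" unfolding s_def using cSup_upper[OF _ bdd] by simp
      qed
      show "{..s} \<subseteq> ?S"
      proof
        fix x assume "x \<in> {..s}"
        then have "?F x \<le> ?F s" using mono by simp
        also have "?F s \<le> t" using sS by simp
        finally show "x \<in> ?S" by simp
      qed
    qed
    have "x0 \<le> s" unfolding s_def using x0 by (intro cSup_upper[OF _ bdd]) simp
    then have "?F s \<ge> t" using mono[of x0 s] x0 by simp
    moreover have "?F s \<le> t" using sS by simp
    ultimately show ?thesis using Seq by (simp add: cdf_def2)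
  qed
  show ?thesis
  proof (cases "t < 0")
    case True
    have "{x. ?F x \<le> t} = {}"
    proof (rule equals0I)
      fix x assume "x \<in> {x. ?F x \<le> t}"
      then have "?F x \<le> t" by simp
      then show False using cdf_nonneg[of x] True by simp
    qed
    then show ?thesis using True by simp
  next
    case nn: False
    show ?thesis
    proof (cases "t \<ge> 1")
      case True
      have "{x. ?F x \<le> t} = UNIV"
      proof -
        have "\<And>x. ?F x \<le> t" using cdf_bounded_prob True by (meson order_trans)
        then show ?thesis by simp
      qed
      then show ?thesis using True prob_space by simp
    next
      case lt1: False
      show ?thesis
      proof (cases "t = 0")
        case False then show ?thesis using mid[of t] nn lt1 by simp
      next
        case True
        have "measure D {x. ?F x \<le> 0} \<le> 0 + e" if e: "e > 0" for e
        proof (cases "e < 1")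
          case True
          have "measure D {x. ?F x \<le> 0} \<le> measure D {x. ?F x \<le> e}"
          proof (rule finite_measure_mono)
            show "{x. ?F x \<le> 0} \<subseteq> {x. ?F x \<le> e}" using e by auto
            have "mono ?F" using mono by (simp add: mono_def)
            then have [measurable]: "?F \<in> borel_measurable borel" by (rule borel_measurable_mono)
            have "{x \<in> space borel. ?F x \<le> e} \<in> sets borel" by measurable
            then show "{x. ?F x \<le> e} \<in> sets D" by simp
          qed
          then show ?thesis using mid[of e] e True by simp
        next
          case False
          have "measure D {x. ?F x \<le> 0} \<le> 1" by (rule prob_le_1)
          then show ?thesis using False by linarith
        qed
        then have "measure D {x. ?F x \<le> 0} \<le> 0" by (rule field_le_epsilon)
        then show ?thesis using True by (simp add: antisym)
      qed
    qed
  qed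
qed

lemma (in prob_space) prob_ties_zero:
  fixes A B :: "'a \<Rightarrow> real"
  assumes ind: "indep_var borel A borel B"
    and cont: "\<And>x. measure (distr M borel B) {x} = 0"
  shows "prob {\<omega> \<in> space M. A \<omega> = B \<omega>} = 0"
proof -
  have rvA[measurable]: "A \<in> borel_measurable M" using indep_var_rv1[OF ind] .
  have rvB[measurable]: "B \<in> borel_measurable M" using indep_var_rv2[OF ind] .
  let ?DA = "distr M borel A" and ?DB = "distr M borel B"
  have eq: "?DA \<Otimes>\<^sub>M ?DB = distr M (borel \<Otimes>\<^sub>M borel) (\<lambda>x. (A x, B x))"
    using ind unfolding indep_var_distribution_eq by blast
  let ?diag = "{p :: real \<times> real. fst p = snd p}"
  have diag[measurable]: "?diag \<in> sets (borel \<Otimes>\<^sub>M borel)"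
  proof -
    have "?diag = {p \<in> space (borel \<Otimes>\<^sub>M borel). fst p = snd p}" by (simp add: space_pair_measure)
    also have "\<dots> \<in> sets (borel \<Otimes>\<^sub>M borel)" by measurable
    finally show ?thesis .
  qed
  interpret DB: prob_space ?DB by (rule prob_space_distr) simp
  have "emeasure (?DA \<Otimes>\<^sub>M ?DB) ?diag = (\<integral>\<^sup>+x. emeasure ?DB (Pair x -` ?diag) \<partial>?DA)"
    by (rule DB.emeasure_pair_measure_alt) (simp add: diag)
  also have "\<dots> = (\<integral>\<^sup>+x. 0 \<partial>?DA)"
  proof (rule nn_integral_cong)
    fix x
    have "Pair x -` ?diag = {x}" by auto
    then show "emeasure ?DB (Pair x -` ?diag) = 0"
      using cont[of x] by (simp add: DB.emeasure_eq_measure)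
  qed
  finally have "emeasure (distr M (borel \<Otimes>\<^sub>M borel) (\<lambda>x. (A x, B x))) ?diag = 0"
    by (simp add: eq)
  then have "emeasure M ((\<lambda>x. (A x, B x)) -` ?diag \<inter> space M) = 0"
    by (subst (asm) emeasure_distr) auto
  moreover have "(\<lambda>x. (A x, B x)) -` ?diag \<inter> space M = {\<omega> \<in> space M. A \<omega> = B \<omega>}" by auto
  ultimately show ?thesis by (simp add: measure_def)
qed

lemma (in prob_space) indep_var_from_vars:
  assumes ind: "indep_vars (\<lambda>_. borel) X I" and "a \<in> I" "b \<in> I" "a \<noteq> b"
  shows "indep_var borel (X a) borel (X b)"
proof -
  have "indep_var (PiM {a} (\<lambda>_. borel)) (\<lambda>\<omega>. restrict (\<lambda>i. X i \<omega>) {a})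
                  (PiM {b} (\<lambda>_. borel)) (\<lambda>\<omega>. restrict (\<lambda>i. X i \<omega>) {b})"
    using assms by (intro indep_var_restrict[OF ind]) auto
  then have "indep_var borel ((\<lambda>f. f a) \<circ> (\<lambda>\<omega>. restrict (\<lambda>i. X i \<omega>) {a}))
                       borel ((\<lambda>f. f b) \<circ> (\<lambda>\<omega>. restrict (\<lambda>i. X i \<omega>) {b}))"
    by (rule indep_var_compose) auto
  also have "((\<lambda>f. f a) \<circ> (\<lambda>\<omega>. restrict (\<lambda>i. X i \<omega>) {a})) = X a" by auto
  also have "((\<lambda>f. f b) \<circ> (\<lambda>\<omega>. restrict (\<lambda>i. X i \<omega>) {b})) = X b" by auto
  finally show ?thesis .
qed

lemma Inl_in_Plus_iff[simp]: "Inl x \<in> A <+> B \<longleftrightarrow> x \<in> A" by auto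
lemma Inr_in_Plus_iff[simp]: "Inr x \<in> A <+> B \<longleftrightarrow> x \<in> B" by auto

lemma (in prob_space) sym_os:
  fixes U V :: "nat \<Rightarrow> 'a \<Rightarrow> real"
  assumes ind: "indep_vars (\<lambda>_. borel) (case_sum U V) ({..<n} <+> {..<n})"
    and lawU: "\<And>i. i < n \<Longrightarrow> distr M borel (U i) = \<mu>"
    and lawV: "\<And>i. i < n \<Longrightarrow> distr M borel (V i) = \<mu>"
    and k: "1 \<le> k" "k \<le> n"
  shows "prob {\<omega> \<in> space M. order_stat (\<lambda>i. V i \<omega>) n k \<le> order_stat (\<lambda>i. U i \<omega>) n k}
       = prob {\<omega> \<in> space M. order_stat (\<lambda>i. U i \<omega>) n k \<le> order_stat (\<lambda>i. V i \<omega>) n k}"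
proof -
  define J where "J = {..<n} <+> {..<n}"
  have J0: "Inl 0 \<in> J" unfolding J_def by (rule InlI) (use k in simp)
  have rv: "\<And>j. j \<in> J \<Longrightarrow> random_variable borel (case_sum U V j)"
    using ind unfolding indep_vars_def J_def by blast
  have rvU: "\<And>i. i < n \<Longrightarrow> U i \<in> borel_measurable M" using rv J_def by force
  have rvV: "\<And>i. i < n \<Longrightarrow> V i \<in> borel_measurable M" using rv J_def by force
  have mu_eq: "\<mu> = distr M borel (U 0)" using lawU k by simp
  have sets_mu: "sets \<mu> = sets borel" by (simp add: mu_eq)
  interpret MU: prob_space \<mu> unfolding mu_eq by (rule prob_space_distr) (use rvU k in simp)
  define Z where "Z = (\<lambda>\<omega>. \<lambda>j\<in>J. case_sum U V j \<omega>)"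
  have Zm: "Z \<in> measurable M (PiM J (\<lambda>_. borel))" unfolding Z_def
    by (rule measurable_restrict) (rule rv)
  let ?P = "PiM J (\<lambda>_. \<mu>)"
  have setsP: "sets ?P = sets (PiM J (\<lambda>_. borel))" by (rule sets_PiM_cong) (simp_all add: sets_mu)
  have spaceP: "space ?P = space (PiM J (\<lambda>_. borel))" by (rule sets_eq_imp_space_eq[OF setsP])
  have DZ: "distr M (PiM J (\<lambda>_. borel)) Z = ?P"
  proof -
    have "distr M (PiM J (\<lambda>_. borel)) Z = PiM J (\<lambda>j. distr M borel (case_sum U V j))"
      using indep_vars_iff_distr_eq_PiM'[where I=J and M'="\<lambda>_. borel" and X="case_sum U V"] ind rv J0
      unfolding Z_def J_def by auto
    also have "\<dots> = ?P"
    proof (rule PiM_cong)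
      fix j assume "j \<in> J"
      then show "distr M borel (case_sum U V j) = \<mu>"
        by (cases j) (auto simp: J_def lawU lawV)
    qed simp
    finally show ?thesis .
  qed
  define \<sigma> where "\<sigma> = (\<lambda>j::nat+nat. case j of Inl i \<Rightarrow> Inr i | Inr i \<Rightarrow> Inl i)"
  have \<sigma>inj: "inj_on \<sigma> J" by (auto simp: inj_on_def \<sigma>_def split: sum.splits)
  have \<sigma>J: "\<sigma> \<in> J \<rightarrow> J" by (auto simp: J_def \<sigma>_def split: sum.splits)
  define T where "T = (\<lambda>w::nat+nat \<Rightarrow> real. \<lambda>j\<in>J. w (\<sigma> j))"
  have DT: "distr ?P ?P T = ?P"
    using distr_PiM_reindex[of J "\<lambda>_. \<mu>" \<sigma> J] MU.prob_space_axioms \<sigma>inj \<sigma>J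
    unfolding T_def by simp
  have Tm: "T \<in> measurable ?P ?P" unfolding T_def
    by (rule measurable_restrict) (use \<sigma>J in \<open>auto intro!: measurable_component_singleton\<close>)
  define g where "g = (\<lambda>w::nat+nat \<Rightarrow> real. order_stat (\<lambda>i. w (Inl i)) n k)"
  define h where "h = (\<lambda>w::nat+nat \<Rightarrow> real. order_stat (\<lambda>i. w (Inr i)) n k)"
  have comp: "(\<lambda>w. w j) \<in> borel_measurable ?P" if "j \<in> J" for j
    using measurable_component_singleton[OF that, of "\<lambda>_. \<mu>"]
    by (simp add: measurable_cong_sets[OF refl sets_mu])
  have gm[measurable]: "g \<in> borel_measurable ?P" unfolding g_def
    by (rule borel_measurable_os[OF _ k]) (rule comp, simp add: J_def)
  have hm[measurable]: "h \<in> borel_measurable ?P" unfolding h_def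
    by (rule borel_measurable_os[OF _ k]) (rule comp, simp add: J_def)
  define A where "A = {w \<in> space ?P. h w \<le> g w}"
  define B where "B = {w \<in> space ?P. g w \<le> h w}"
  have A: "A \<in> sets ?P" unfolding A_def by measurable
  have B: "B \<in> sets ?P" unfolding B_def by measurable
  have hZ: "h (Z \<omega>) = order_stat (\<lambda>i. V i \<omega>) n k" for \<omega>
    unfolding h_def Z_def by (rule os_cong) (simp add: J_def)
  have gZ: "g (Z \<omega>) = order_stat (\<lambda>i. U i \<omega>) n k" for \<omega>
    unfolding g_def Z_def by (rule os_cong) (simp add: J_def)
  have Zsp: "Z \<omega> \<in> space ?P" if "\<omega> \<in> space M" for \<omega>
    using measurable_space[OF Zm that] spaceP by simp
  have lhs: "prob {\<omega> \<in> space M. order_stat (\<lambda>i. V i \<omega>) n k \<le> order_stat (\<lambda>i. U i \<omega>) n k} = measure ?P A"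
  proof -
    have "measure ?P A = measure (distr M (PiM J (\<lambda>_. borel)) Z) A" by (simp add: DZ)
    also have "\<dots> = prob (Z -` A \<inter> space M)" by (rule measure_distr[OF Zm]) (use A setsP in simp)
    also have "Z -` A \<inter> space M = {\<omega> \<in> space M. order_stat (\<lambda>i. V i \<omega>) n k \<le> order_stat (\<lambda>i. U i \<omega>) n k}"
      unfolding A_def using Zsp hZ gZ by auto
    finally show ?thesis by simp
  qed
  have rhs: "prob {\<omega> \<in> space M. order_stat (\<lambda>i. U i \<omega>) n k \<le> order_stat (\<lambda>i. V i \<omega>) n k} = measure ?P B"
  proof -
    have "measure ?P B = measure (distr M (PiM J (\<lambda>_. borel)) Z) B" by (simp add: DZ)
    also have "\<dots> = prob (Z -` B \<inter> space M)" by (rule measure_distr[OF Zm]) (use B setsP in simp)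
    also have "Z -` B \<inter> space M = {\<omega> \<in> space M. order_stat (\<lambda>i. U i \<omega>) n k \<le> order_stat (\<lambda>i. V i \<omega>) n k}"
      unfolding B_def using Zsp hZ gZ by auto
    finally show ?thesis by simp
  qed
  have hT: "h (T w) = g w" for w
    unfolding h_def g_def T_def by (rule os_cong) (simp add: J_def \<sigma>_def)
  have gT: "g (T w) = h w" for w
    unfolding h_def g_def T_def by (rule os_cong) (simp add: J_def \<sigma>_def)
  have "measure ?P B = measure ?P (T -` A \<inter> space ?P)"
  proof -
    have "T -` A \<inter> space ?P = B"
      unfolding A_def B_def using measurable_space[OF Tm] hT gT by auto
    then show ?thesis by simp
  qed
  also have "\<dots> = measure (distr ?P ?P T) A" by (rule measure_distr[OF Tm A, symmetric])
  also have "\<dots> = measure ?P A" by (simp add: DT)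
  finally show ?thesis using lhs rhs by simp
qed

lemma (in prob_space) hoeff_count:
  fixes W :: "'i \<Rightarrow> 'a \<Rightarrow> real" and g :: "nat \<Rightarrow> 'i"
  assumes ind: "indep_vars (\<lambda>_. borel) W (g ` {..<n})" and inj: "inj_on g {..<n}"
    and law: "\<And>i. i < n \<Longrightarrow> prob {\<omega> \<in> space M. W (g i) \<omega> \<le> c} = p"
    and n: "n > 0" and e: "\<epsilon> \<ge> 0"
  shows "prob {\<omega> \<in> space M. real (card {i. i < n \<and> W (g i) \<omega> \<le> c}) \<ge> n * p + \<epsilon>} \<le> exp (-2 * \<epsilon>\<^sup>2 / n)"
    and "prob {\<omega> \<in> space M. real (card {i. i < n \<and> W (g i) \<omega> \<le> c}) \<le> n * p - \<epsilon>} \<le> exp (-2 * \<epsilon>\<^sup>2 / n)"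
proof -
  define I where "I = g ` {..<n}"
  define Xi where "Xi = (\<lambda>j \<omega>. indicator {..c} (W j \<omega>) :: real)"
  have indX: "indep_vars (\<lambda>_. borel) Xi I"
    unfolding Xi_def I_def by (rule indep_vars_compose2[OF ind]) simp
  have Xeq: "Xi j = indicator {\<omega>. W j \<omega> \<le> c}" for j
    by (auto simp: Xi_def indicator_def fun_eq_iff)
  have expX: "expectation (Xi (g i)) = p" if "i < n" for i
  proof -
    have "expectation (Xi (g i)) = measure M ({\<omega>. W (g i) \<omega> \<le> c} \<inter> space M)"
      by (simp add: Xeq)
    also have "{\<omega>. W (g i) \<omega> \<le> c} \<inter> space M = {\<omega> \<in> space M. W (g i) \<omega> \<le> c}" by auto
    finally show ?thesis using law[OF that] by simp
  qed
  have mu: "(\<Sum>j\<in>I. expectation (Xi j)) = n * p"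
    unfolding I_def using inj by (simp add: sum.reindex expX)
  interpret H: Hoeffding_ineq M I Xi "\<lambda>_. 0" "\<lambda>_. 1" "n * p"
  proof unfold_locales
    show "finite I" by (simp add: I_def)
    show "indep_vars (\<lambda>_. borel) Xi I" by (rule indX)
    show "AE x in M. Xi i x \<in> {0..1}" for i by (simp add: Xi_def)
    show "n * p \<equiv> \<Sum>i\<in>I. expectation (Xi i)" using mu by simp
  qed
  have sumeq: "(\<Sum>j\<in>I. Xi j \<omega>) = real (card {i. i < n \<and> W (g i) \<omega> \<le> c})" for \<omega>
  proof -
    have "(\<Sum>j\<in>I. Xi j \<omega>) = (\<Sum>i<n. Xi (g i) \<omega>)" unfolding I_def using inj by (simp add: sum.reindex)
    also have "\<dots> = (\<Sum>i<n. if W (g i) \<omega> \<le> c then 1 else 0)"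
      by (rule sum.cong) (simp_all add: Xi_def indicator_def)
    finally show ?thesis using card_sum_if[of n "\<lambda>i. W (g i) \<omega> \<le> c"] by linarith
  qed
  have cardI: "(\<Sum>i\<in>I. ((\<lambda>_. 1::real) i - (\<lambda>_. 0) i)\<^sup>2) = n"
    unfolding I_def using inj by (simp add: card_image)
  show "prob {\<omega> \<in> space M. real (card {i. i < n \<and> W (g i) \<omega> \<le> c}) \<ge> n * p + \<epsilon>} \<le> exp (-2 * \<epsilon>\<^sup>2 / n)"
    using H.Hoeffding_ineq_ge[OF e] n unfolding cardI sumeq by simp
  show "prob {\<omega> \<in> space M. real (card {i. i < n \<and> W (g i) \<omega> \<le> c}) \<le> n * p - \<epsilon>} \<le> exp (-2 * \<epsilon>\<^sup>2 / n)"
    using H.Hoeffding_ineq_le[OF e] n unfolding cardI sumeq by simp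
qed

lemma count_measurable:
  fixes f :: "nat \<Rightarrow> 'a \<Rightarrow> real" and c :: real
  assumes "\<And>i. i < n \<Longrightarrow> f i \<in> borel_measurable N"
  shows "(\<lambda>\<omega>. real (card {i. i < n \<and> f i \<omega> \<le> c})) \<in> borel_measurable N"
proof -
  have "(\<lambda>\<omega>. \<Sum>i<n. if f i \<omega> \<le> c then 1 else (0::real)) \<in> borel_measurable N"
  proof (rule borel_measurable_sum)
    fix i assume "i \<in> {..<n}"
    then have [measurable]: "f i \<in> borel_measurable N" using assms by auto
    show "(\<lambda>\<omega>. if f i \<omega> \<le> c then 1 else (0::real)) \<in> borel_measurable N" by measurable
  qed
  then show ?thesis by (simp only: card_sum_if)
qed

locale unif_family = prob_space +
  fixes W :: "'i \<Rightarrow> 'a \<Rightarrow> real" and g :: "nat \<Rightarrow> 'i" and n :: nat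
  assumes ind: "indep_vars (\<lambda>_. borel) W (g ` {..<n})" and inj: "inj_on g {..<n}"
    and law: "\<And>i t. i < n \<Longrightarrow> prob {\<omega> \<in> space M. W (g i) \<omega> \<le> t} = max 0 (min 1 t)"
begin

lemma rvW: "i < n \<Longrightarrow> W (g i) \<in> borel_measurable M"
  using ind unfolding indep_vars_def by auto

lemma os_tail_le:
  fixes a \<epsilon> :: real
  assumes k: "1 \<le> k" "k \<le> n" and a: "0 \<le> a" "a \<le> 1" and e: "\<epsilon> \<ge> 0" "real k \<ge> n * a + \<epsilon>"
  shows "prob {\<omega> \<in> space M. order_stat (\<lambda>i. W (g i) \<omega>) n k \<le> a} \<le> exp (-2 * \<epsilon>\<^sup>2 / n)"
proof -
  have sub: "{\<omega> \<in> space M. order_stat (\<lambda>i. W (g i) \<omega>) n k \<le> a} \<subseteq>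
        {\<omega> \<in> space M. real (card {i. i < n \<and> W (g i) \<omega> \<le> a}) \<ge> n * a + \<epsilon>}"
    using e by (auto simp: os_le_iff[OF k])
  have meas: "{\<omega> \<in> space M. real (card {i. i < n \<and> W (g i) \<omega> \<le> a}) \<ge> n * a + \<epsilon>} \<in> events"
  proof -
    have [measurable]: "(\<lambda>\<omega>. real (card {i. i < n \<and> W (g i) \<omega> \<le> a})) \<in> borel_measurable M"
      by (rule count_measurable) (rule rvW)
    show ?thesis by measurable
  qed
  have "prob {\<omega> \<in> space M. order_stat (\<lambda>i. W (g i) \<omega>) n k \<le> a}
     \<le> prob {\<omega> \<in> space M. real (card {i. i < n \<and> W (g i) \<omega> \<le> a}) \<ge> n * a + \<epsilon>}"
    by (rule finite_measure_mono[OF sub meas])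
  also have "\<dots> \<le> exp (-2 * \<epsilon>\<^sup>2 / n)"
    by (rule hoeff_count(1)[where W=W and g=g and n=n]) (use ind inj law a k e in auto)
  finally show ?thesis .
qed

lemma os_tail_gt:
  fixes b \<epsilon> :: real
  assumes k: "1 \<le> k" "k \<le> n" and b: "0 \<le> b" "b \<le> 1" and e: "\<epsilon> \<ge> 0" "real k - 1 \<le> n * b - \<epsilon>"
  shows "prob {\<omega> \<in> space M. order_stat (\<lambda>i. W (g i) \<omega>) n k > b} \<le> exp (-2 * \<epsilon>\<^sup>2 / n)"
proof -
  have sub: "{\<omega> \<in> space M. order_stat (\<lambda>i. W (g i) \<omega>) n k > b} \<subseteq>
        {\<omega> \<in> space M. real (card {i. i < n \<and> W (g i) \<omega> \<le> b}) \<le> n * b - \<epsilon>}"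
  proof
    fix \<omega> assume "\<omega> \<in> {\<omega> \<in> space M. order_stat (\<lambda>i. W (g i) \<omega>) n k > b}"
    then have "\<omega> \<in> space M" "\<not> order_stat (\<lambda>i. W (g i) \<omega>) n k \<le> b" by auto
    then have "card {i. i < n \<and> W (g i) \<omega> \<le> b} < k" by (simp add: os_le_iff[OF k])
    then have "real (card {i. i < n \<and> W (g i) \<omega> \<le> b}) \<le> real k - 1" by linarith
    then show "\<omega> \<in> {\<omega> \<in> space M. real (card {i. i < n \<and> W (g i) \<omega> \<le> b}) \<le> n * b - \<epsilon>}"
      using e \<open>\<omega> \<in> space M\<close> by auto
  qed
  have meas: "{\<omega> \<in> space M. real (card {i. i < n \<and> W (g i) \<omega> \<le> b}) \<le> n * b - \<epsilon>} \<in> events"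
  proof -
    have [measurable]: "(\<lambda>\<omega>. real (card {i. i < n \<and> W (g i) \<omega> \<le> b})) \<in> borel_measurable M"
      by (rule count_measurable) (rule rvW)
    show ?thesis by measurable
  qed
  have "prob {\<omega> \<in> space M. order_stat (\<lambda>i. W (g i) \<omega>) n k > b}
     \<le> prob {\<omega> \<in> space M. real (card {i. i < n \<and> W (g i) \<omega> \<le> b}) \<le> n * b - \<epsilon>}"
    by (rule finite_measure_mono[OF sub meas])
  also have "\<dots> \<le> exp (-2 * \<epsilon>\<^sup>2 / n)"
    by (rule hoeff_count(2)[where W=W and g=g and n=n]) (use ind inj law b k e in auto)
  finally show ?thesis .
qed

lemma prob_union_zero:
  assumes "\<And>i. i < n \<Longrightarrow> prob {\<omega> \<in> space M. P i \<omega>} = 0"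
    and "\<And>i. i < n \<Longrightarrow> {\<omega> \<in> space M. P i \<omega>} \<in> events"
    and "S \<subseteq> (\<Union>i<n. {\<omega> \<in> space M. P i \<omega>})"
  shows "prob S = 0"
proof -
  have "prob (\<Union>i<n. {\<omega> \<in> space M. P i \<omega>}) \<le> (\<Sum>i<n. prob {\<omega> \<in> space M. P i \<omega>})"
    by (rule finite_measure_subadditive_finite) (use assms(2) in auto)
  also have "\<dots> = 0" using assms(1) by simp
  finally have "prob (\<Union>i<n. {\<omega> \<in> space M. P i \<omega>}) = 0" using measure_nonneg by (meson antisym)
  moreover have "(\<Union>i<n. {\<omega> \<in> space M. P i \<omega>}) \<in> events" using assms(2) by auto
  ultimately show ?thesis using finite_measure_mono[OF assms(3)] measure_nonneg[of M S] by simp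
qed

lemma os_le0:
  assumes k: "1 \<le> k" "k \<le> n"
  shows "prob {\<omega> \<in> space M. order_stat (\<lambda>i. W (g i) \<omega>) n k \<le> 0} = 0"
proof (rule prob_union_zero[where P="\<lambda>i \<omega>. W (g i) \<omega> \<le> 0"])
  show "prob {\<omega> \<in> space M. W (g i) \<omega> \<le> 0} = 0" if "i < n" for i using law[OF that] by simp
  show "{\<omega> \<in> space M. W (g i) \<omega> \<le> 0} \<in> events" if "i < n" for i
    using rvW[OF that] by measurable
  show "{\<omega> \<in> space M. order_stat (\<lambda>i. W (g i) \<omega>) n k \<le> 0} \<subseteq> (\<Union>i<n. {\<omega> \<in> space M. W (g i) \<omega> \<le> 0})"
  proof
    fix \<omega> assume w: "\<omega> \<in> {\<omega> \<in> space M. order_stat (\<lambda>i. W (g i) \<omega>) n k \<le> 0}"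
    obtain i where i: "i < n" "order_stat (\<lambda>i. W (g i) \<omega>) n k = W (g i) \<omega>" using os_in[OF k, of "\<lambda>i. W (g i) \<omega>"] by blast
    show "\<omega> \<in> (\<Union>i<n. {\<omega> \<in> space M. W (g i) \<omega> \<le> 0})" using w i by auto
  qed
qed

lemma W_ge1: assumes "i < n" shows "prob {\<omega> \<in> space M. W (g i) \<omega> \<ge> 1} = 0"
proof -
  have [measurable]: "W (g i) \<in> borel_measurable M" by (rule rvW[OF assms])
  have "prob {\<omega> \<in> space M. W (g i) \<omega> \<ge> 1} \<le> 0 + e" if e: "e > 0" for e
  proof -
    define t where "t = 1 - min e 1"
    have t: "0 \<le> t" "t < 1" using e by (auto simp: t_def)
    have "{\<omega> \<in> space M. W (g i) \<omega> \<ge> 1} \<subseteq> space M - {\<omega> \<in> space M. W (g i) \<omega> \<le> t}" using t by auto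
    then have "prob {\<omega> \<in> space M. W (g i) \<omega> \<ge> 1} \<le> prob (space M - {\<omega> \<in> space M. W (g i) \<omega> \<le> t})"
      by (rule finite_measure_mono) measurable
    also have "\<dots> = 1 - prob {\<omega> \<in> space M. W (g i) \<omega> \<le> t}" by (rule prob_compl) measurable
    also have "\<dots> = 1 - t" using law[OF assms, of t] t by simp
    also have "\<dots> \<le> e" by (simp add: t_def)
    finally show ?thesis by simp
  qed
  then have "prob {\<omega> \<in> space M. W (g i) \<omega> \<ge> 1} \<le> 0" by (rule field_le_epsilon)
  then show ?thesis using measure_nonneg[of M] by (simp add: antisym)
qed

lemma os_ge1:
  assumes k: "1 \<le> k" "k \<le> n"
  shows "prob {\<omega> \<in> space M. order_stat (\<lambda>i. W (g i) \<omega>) n k \<ge> 1} = 0"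
proof (rule prob_union_zero[where P="\<lambda>i \<omega>. W (g i) \<omega> \<ge> 1"])
  show "prob {\<omega> \<in> space M. W (g i) \<omega> \<ge> 1} = 0" if "i < n" for i using W_ge1[OF that] .
  show "{\<omega> \<in> space M. W (g i) \<omega> \<ge> 1} \<in> events" if "i < n" for i
    using rvW[OF that] by measurable
  show "{\<omega> \<in> space M. order_stat (\<lambda>i. W (g i) \<omega>) n k \<ge> 1} \<subseteq> (\<Union>i<n. {\<omega> \<in> space M. W (g i) \<omega> \<ge> 1})"
  proof
    fix \<omega> assume w: "\<omega> \<in> {\<omega> \<in> space M. order_stat (\<lambda>i. W (g i) \<omega>) n k \<ge> 1}"
    obtain i where i: "i < n" "order_stat (\<lambda>i. W (g i) \<omega>) n k = W (g i) \<omega>" using os_in[OF k, of "\<lambda>i. W (g i) \<omega>"] by blast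
    show "\<omega> \<in> (\<Union>i<n. {\<omega> \<in> space M. W (g i) \<omega> \<ge> 1})" using w i by auto
  qed
qed

end

lemma kk_props:
  fixes \<gamma>s :: "nat \<Rightarrow> real"
  assumes g: "\<gamma>s n \<in> {0..1}" and n: "n \<ge> 1"
  defines "k \<equiv> 1 + nat \<lfloor>real (n - 1) * \<gamma>s n\<rfloor>"
  shows "1 \<le> k" "k \<le> n" "real k > real (n - 1) * \<gamma>s n" "real k \<le> 1 + real (n - 1) * \<gamma>s n"
proof -
  have nn: "real (n - 1) * \<gamma>s n \<ge> 0" using g by simp
  have le: "real (n - 1) * \<gamma>s n \<le> real (n - 1)" using g by (simp add: mult_left_le)
  have fl: "0 \<le> \<lfloor>real (n - 1) * \<gamma>s n\<rfloor>" using nn by simp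
  have rk: "real k = 1 + real_of_int \<lfloor>real (n - 1) * \<gamma>s n\<rfloor>" unfolding k_def using fl by simp
  show "1 \<le> k" unfolding k_def by simp
  have "real_of_int \<lfloor>real (n - 1) * \<gamma>s n\<rfloor> \<le> real (n - 1)"
    using le of_int_floor_le[of "real (n - 1) * \<gamma>s n"] by linarith
  then have "real k \<le> real n" using rk n by simp
  then show "k \<le> n" by simp
  show "real k > real (n - 1) * \<gamma>s n" using rk real_of_int_floor_gt_diff_one[of "real (n - 1) * \<gamma>s n"] by linarith
  show "real k \<le> 1 + real (n - 1) * \<gamma>s n" using rk of_int_floor_le[of "real (n - 1) * \<gamma>s n"] by linarith
qed

lemma kk_lower:
  fixes \<gamma>s :: "nat \<Rightarrow> real" and \<gamma> a :: real
  assumes g: "\<And>n. \<gamma>s n \<in> {0..1}" and lim: "\<gamma>s \<longlonglongrightarrow> \<gamma>" and a: "a < \<gamma>"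
  shows "\<exists>c. c > (0::real) \<and> eventually (\<lambda>n. real (1 + nat \<lfloor>real (n - 1) * \<gamma>s n\<rfloor>) \<ge> real n * a + c * real n) sequentially"
proof -
  define c where "c = (\<gamma> - a) / 4"
  have c: "c > 0" using a by (simp add: c_def)
  have ev1: "eventually (\<lambda>n. \<gamma>s n > (\<gamma> + a) / 2) sequentially"
    using lim by (rule order_tendstoD) (use a in simp)
  obtain N where N: "real N \<ge> 1 / c" using real_arch_simple by blast
  have ev2: "eventually (\<lambda>n. n \<ge> max 1 N) sequentially" by (rule eventually_ge_at_top)
  have ev: "eventually (\<lambda>n. real (1 + nat \<lfloor>real (n - 1) * \<gamma>s n\<rfloor>) \<ge> n * a + c * n) sequentially"
    using ev1 ev2
  proof eventually_elim
    case (elim n)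
    then have n1: "n \<ge> 1" and nN: "n \<ge> N" by auto
    have k0: "real (1 + nat \<lfloor>real (n - 1) * \<gamma>s n\<rfloor>) > real (n - 1) * \<gamma>s n"
      using kk_props(3)[OF g n1] by simp
    have e1: "real (n - 1) * \<gamma>s n = real n * \<gamma>s n - \<gamma>s n"
      using n1 by (simp add: of_nat_diff left_diff_distrib)
    have e2: "real n * ((\<gamma> + a) / 2) \<le> real n * \<gamma>s n"
      by (rule mult_left_mono) (use elim(1) in auto)
    have e3: "\<gamma>s n \<le> 1" using g[of n] by simp
    have e4: "c * real n \<ge> 1"
    proof -
      have "real n \<ge> 1 / c" using N nN by linarith
      then have "c * real n \<ge> c * (1 / c)" using c by (intro mult_left_mono) auto
      then show ?thesis using c by simp
    qed
    have e5: "real n * ((\<gamma> + a) / 2) = real n * a + 2 * c * real n" by (simp add: c_def field_simps)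
    have e6: "real n * a + c * real n = n * a + c * n" by simp
    show ?case using k0 e1 e2 e3 e4 e5 by linarith
  qed
  show ?thesis
    apply (rule exI[of _ c])
    using c ev by (rule conjI)
qed

lemma kk_upper:
  fixes \<gamma>s :: "nat \<Rightarrow> real" and \<gamma> b :: real
  assumes g: "\<And>n. \<gamma>s n \<in> {0..1}" and lim: "\<gamma>s \<longlonglongrightarrow> \<gamma>" and b: "\<gamma> < b"
  shows "\<exists>c. c > (0::real) \<and> eventually (\<lambda>n. real (1 + nat \<lfloor>real (n - 1) * \<gamma>s n\<rfloor>) - 1 \<le> real n * b - c * real n) sequentially"
proof -
  define c where "c = (b - \<gamma>) / 2"
  have c: "c > 0" using b by (simp add: c_def)
  have ev1: "eventually (\<lambda>n. \<gamma>s n < (\<gamma> + b) / 2) sequentially"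
    using lim by (rule order_tendstoD) (use b in simp)
  have ev2: "eventually (\<lambda>n. n \<ge> 1) sequentially" by (rule eventually_ge_at_top)
  have ev: "eventually (\<lambda>n. real (1 + nat \<lfloor>real (n - 1) * \<gamma>s n\<rfloor>) - 1 \<le> n * b - c * n) sequentially"
    using ev1 ev2
  proof eventually_elim
    case (elim n)
    have "real (1 + nat \<lfloor>real (n - 1) * \<gamma>s n\<rfloor>) - 1 \<le> real (n - 1) * \<gamma>s n"
      using kk_props(4)[OF g elim(2)] by simp
    also have "\<dots> \<le> real n * \<gamma>s n" using g[of n] by (intro mult_right_mono) auto
    also have "\<dots> \<le> real n * ((\<gamma> + b) / 2)" using elim(1) by (intro mult_left_mono) auto
    also have "\<dots> = n * b - c * n" by (simp add: c_def field_simps)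
    finally show ?case .
  qed
  show ?thesis
    apply (rule exI[of _ c])
    using c ev by (rule conjI)
qed

lemma exp_bound_lim:
  fixes f :: "nat \<Rightarrow> real" and c :: real
  assumes c: "c > 0" and f: "\<And>n. f n \<ge> 0"
    and ev: "eventually (\<lambda>n. \<exists>\<epsilon>. \<epsilon> \<ge> c * n \<and> f n \<le> exp (-2 * \<epsilon>\<^sup>2 / n)) sequentially"
  shows "f \<longlonglongrightarrow> 0"
proof (rule tendsto_sandwich[of "\<lambda>_. 0" f sequentially "\<lambda>n. exp (- 2 * c\<^sup>2) ^ n"])
  show "eventually (\<lambda>n. 0 \<le> f n) sequentially" using f by simp
  show "eventually (\<lambda>n. f n \<le> exp (- 2 * c\<^sup>2) ^ n) sequentially"
    using ev eventually_ge_at_top[of 1]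
  proof eventually_elim
    case (elim n)
    then obtain \<epsilon> where e: "\<epsilon> \<ge> c * n" "f n \<le> exp (-2 * \<epsilon>\<^sup>2 / n)" by blast
    have np: "real n > 0" using elim(2) by simp
    have "(c * n)\<^sup>2 \<le> \<epsilon>\<^sup>2" using e(1) c np by (intro power_mono) auto
    then have "c\<^sup>2 * n \<le> \<epsilon>\<^sup>2 / n" using np by (simp add: field_simps power2_eq_square)
    then have "-2 * \<epsilon>\<^sup>2 / n \<le> (- 2 * c\<^sup>2) * n" by simp
    then have "exp (-2 * \<epsilon>\<^sup>2 / n) \<le> exp ((- 2 * c\<^sup>2) * n)" by simp
    also have "\<dots> = exp (real n * (- 2 * c\<^sup>2))" by (simp add: mult.commute)
    also have "\<dots> = exp (- 2 * c\<^sup>2) ^ n" by (rule exp_of_nat_mult)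
    finally show ?case using e(2) by simp
  qed
  show "(\<lambda>n. exp (- 2 * c\<^sup>2) ^ n) \<longlonglongrightarrow> 0"
    by (rule LIMSEQ_power_zero) (use c in simp)
qed simp

lemma gs_lim:
  fixes \<gamma>s :: "nat \<Rightarrow> real"
  assumes rate: "(\<lambda>n. \<gamma>s n - \<gamma>) \<in> O(\<lambda>n. 1 / real n)"
  shows "\<gamma>s \<longlonglongrightarrow> \<gamma>"
proof -
  have "(\<lambda>n. 1 / real n) \<in> o(\<lambda>n. 1::real)"
    by (rule smalloI_tendsto) (simp_all add: lim_const_over_n)
  then have "(\<lambda>n. \<gamma>s n - \<gamma>) \<in> o(\<lambda>n. 1::real)" by (rule landau_o.big_small_trans[OF rate])
  then have "(\<lambda>n. (\<gamma>s n - \<gamma>) / 1) \<longlonglongrightarrow> 0" by (rule smalloD_tendsto)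
  then show ?thesis by (simp add: LIM_zero_cancel)
qed

lemma quantile_props:
  fixes F :: "real \<Rightarrow> real"
  assumes mono: "mono F" and cont: "continuous_on UNIV F"
    and bot: "(F \<longlongrightarrow> 0) at_bot" and top: "(F \<longlongrightarrow> 1) at_top" and v: "0 < v" "v < 1"
  shows "v \<le> F (quantile F v)" and "\<And>y. v \<le> F y \<Longrightarrow> quantile F v \<le> y"
proof -
  let ?S = "{x. v \<le> F x}"
  have "eventually (\<lambda>x. F x > v) at_top" using top v(2) by (rule order_tendstoD)
  then obtain b where b: "F b > v" by (auto simp: eventually_at_top_linorder)
  have "eventually (\<lambda>x. F x < v) at_bot" using bot v(1) by (rule order_tendstoD)
  then obtain a where a: "F a < v" by (auto simp: eventually_at_bot_linorder)
  have ne: "?S \<noteq> {}" using b by (auto intro!: exI[of _ b])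
  have bdd: "bdd_below ?S"
  proof (rule bdd_belowI[of _ a])
    fix x assume "x \<in> ?S"
    then have x: "v \<le> F x" by simp
    show "a \<le> x"
    proof (rule ccontr)
      assume "\<not> a \<le> x"
      then have "F x \<le> F a" using mono by (simp add: monoD)
      then show False using a x by simp
    qed
  qed
  have cl: "closed ?S" by (rule closed_Collect_le[OF continuous_on_const cont])
  have "Inf ?S \<in> ?S" by (rule closed_contains_Inf[OF ne bdd cl])
  then show "v \<le> F (quantile F v)" by (simp add: quantile_def)
  show "quantile F v \<le> y" if "v \<le> F y" for y
    unfolding quantile_def by (rule cInf_lower) (use that bdd in auto)
qed

lemma det:
  fixes FX FY :: "real \<Rightarrow> real"
  assumes mX: "mono FX" and cX: "continuous_on UNIV FX" and bX: "(FX \<longlongrightarrow> 0) at_bot" and tX: "(FX \<longlongrightarrow> 1) at_top"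
    and mY: "mono FY" and cY: "continuous_on UNIV FY" and bY: "(FY \<longlongrightarrow> 0) at_bot" and tY: "(FY \<longlongrightarrow> 1) at_top"
    and q: "quantile FX (FY y) \<le> quantile FY (FY y)" and v: "0 < FY y" "FY y < 1" and yx: "y \<le> x"
  shows "FY y \<le> FX x"
proof -
  have "quantile FY (FY y) \<le> y" by (rule quantile_props(2)[OF mY cY bY tY v]) simp
  then have "quantile FX (FY y) \<le> x" using q yx by linarith
  then have "FX (quantile FX (FY y)) \<le> FX x" using mX by (simp add: monoD)
  moreover have "FY y \<le> FX (quantile FX (FY y))" by (rule quantile_props(1)[OF mX cX bX tX v])
  ultimately show ?thesis by simp
qed

lemma (in prob_space) prob_union_zero':
  assumes fin: "finite I" and z: "\<And>i. i \<in> I \<Longrightarrow> prob (A i) = 0"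
    and ev: "\<And>i. i \<in> I \<Longrightarrow> A i \<in> events" and S: "S \<subseteq> (\<Union>i\<in>I. A i)"
  shows "prob S = 0"
proof -
  have "prob (\<Union>i\<in>I. A i) \<le> (\<Sum>i\<in>I. prob (A i))"
    by (rule finite_measure_subadditive_finite[OF fin]) (use ev in auto)
  also have "\<dots> = 0" using z by simp
  finally have "prob (\<Union>i\<in>I. A i) \<le> 0" .
  moreover have "(\<Union>i\<in>I. A i) \<in> events" using ev fin by auto
  ultimately have "prob S \<le> 0" using finite_measure_mono[OF S] by (meson order_trans)
  then show ?thesis using measure_nonneg[of M S] by simp
qed

lemma real_distr_props:
  assumes D: "real_distribution D"
  shows "mono (cdf D)" "(cdf D \<longlongrightarrow> 0) at_bot" "(cdf D \<longlongrightarrow> 1) at_top"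
proof -
  interpret real_distribution D by fact
  show "mono (cdf D)" by (simp add: mono_def cdf_nondecreasing)
  show "(cdf D \<longlongrightarrow> 0) at_bot" by (rule cdf_lim_at_bot)
  show "(cdf D \<longlongrightarrow> 1) at_top" by (rule cdf_lim_at_top_prob)
qed

lemma (in prob_space) law_transform:
  fixes Z :: "'a \<Rightarrow> real"
  assumes Z: "Z \<in> borel_measurable M" and F: "cdf (distr M borel Z) = F" and cont: "continuous_on UNIV F"
  shows "prob {\<omega> \<in> space M. F (Z \<omega>) \<le> t} = max 0 (min 1 t)"
proof -
  let ?D = "distr M borel Z"
  have D: "real_distribution ?D" using Z by simp
  have "mono F" using real_distr_props(1)[OF D] F by simp
  then have Fm[measurable]: "F \<in> borel_measurable borel" by (rule borel_measurable_mono)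
  have S: "{x. F x \<le> t} \<in> sets borel"
  proof -
    have "{x \<in> space borel. F x \<le> t} \<in> sets borel" by measurable
    then show ?thesis by simp
  qed
  have "measure ?D {x. cdf ?D x \<le> t} = max 0 (min 1 t)"
    by (rule measure_cdf_le[OF D]) (simp add: F cont)
  then have "measure ?D {x. F x \<le> t} = max 0 (min 1 t)" by (simp add: F)
  moreover have "measure ?D {x. F x \<le> t} = prob (Z -` {x. F x \<le> t} \<inter> space M)"
    by (rule measure_distr[OF Z]) (simp add: S)
  moreover have "Z -` {x. F x \<le> t} \<inter> space M = {\<omega> \<in> space M. F (Z \<omega>) \<le> t}" by auto
  ultimately show ?thesis by simp
qed

lemma (in prob_space) cdf_of_law:
  fixes Z :: "'a \<Rightarrow> real"
  assumes Z: "Z \<in> borel_measurable M"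
  shows "cdf (distr M borel Z) t = prob {\<omega> \<in> space M. Z \<omega> \<le> t}"
proof -
  have "cdf (distr M borel Z) t = measure (distr M borel Z) {..t}" by (simp add: cdf_def)
  also have "\<dots> = prob (Z -` {..t} \<inter> space M)" by (rule measure_distr[OF Z]) simp
  also have "Z -` {..t} \<inter> space M = {\<omega> \<in> space M. Z \<omega> \<le> t}" by auto
  finally show ?thesis .
qed

lemma continuous_clamp: "continuous_on UNIV (\<lambda>t::real. max 0 (min 1 t))"
  by (intro continuous_intros)

lemma atom_zero:
  assumes D: "real_distribution D" and c: "continuous_on UNIV (cdf D)"
  shows "measure D {x} = 0"
proof -
  interpret real_distribution D by fact
  have "isCont (cdf D) x" using c continuous_on_eq_continuous_at[of UNIV "cdf D"] by simp
  then show ?thesis using isCont_cdf by simp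
qed

lemma (in prob_space) main_n:
  fixes X Y :: "nat \<Rightarrow> 'a \<Rightarrow> real" and FX FY :: "real \<Rightarrow> real" and \<gamma> \<delta> :: real
  assumes ind: "indep_vars (\<lambda>_. borel) (case_sum X Y) ({..<n} <+> {..<n})"
    and distX: "\<And>i. i < n \<Longrightarrow> cdf (distr M borel (X i)) = FX"
    and distY: "\<And>i. i < n \<Longrightarrow> cdf (distr M borel (Y i)) = FY"
    and contX: "continuous_on UNIV FX" and contY: "continuous_on UNIV FY"
    and k: "1 \<le> k" "k \<le> n"
  defines "W \<equiv> (\<lambda>j \<omega>. case j of Inl i \<Rightarrow> FX (X i \<omega>) | Inr i \<Rightarrow> FY (Y i \<omega>))"
  shows "unif_family M W Inl n" and "unif_family M W Inr n"
    and "(\<forall>u. 0 < u \<and> u < 1 \<and> \<bar>u - \<gamma>\<bar> < \<delta> \<longrightarrow> quantile FX u \<le> quantile FY u) \<longrightarrow>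
         prob {\<omega> \<in> space M. order_stat (\<lambda>i. X i \<omega>) n k \<le> order_stat (\<lambda>i. Y i \<omega>) n k} \<ge>
           1/2 - prob {\<omega> \<in> space M. order_stat (\<lambda>i. W (Inr i) \<omega>) n k \<le> max 0 (\<gamma> - \<delta>)}
               - prob {\<omega> \<in> space M. order_stat (\<lambda>i. W (Inr i) \<omega>) n k \<ge> min 1 (\<gamma> + \<delta>)}"
    and "(\<forall>u. 0 < u \<and> u < 1 \<and> \<bar>u - \<gamma>\<bar> < \<delta> \<longrightarrow> quantile FY u \<le> quantile FX u) \<longrightarrow>
         prob {\<omega> \<in> space M. order_stat (\<lambda>i. X i \<omega>) n k \<le> order_stat (\<lambda>i. Y i \<omega>) n k} \<le>
           1/2 + prob {\<omega> \<in> space M. order_stat (\<lambda>i. W (Inl i) \<omega>) n k \<le> max 0 (\<gamma> - \<delta>)}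
               + prob {\<omega> \<in> space M. order_stat (\<lambda>i. W (Inl i) \<omega>) n k \<ge> min 1 (\<gamma> + \<delta>)}"
proof -
  define J where "J = {..<n} <+> {..<n}"
  have n0: "0 < n" using k by simp
  have rv: "case_sum X Y j \<in> borel_measurable M" if "j \<in> J" for j
    using ind that unfolding indep_vars_def J_def by blast
  have rvX[measurable]: "X i \<in> borel_measurable M" if "i < n" for i
    using rv[of "Inl i"] that by (simp add: J_def)
  have rvY[measurable]: "Y i \<in> borel_measurable M" if "i < n" for i
    using rv[of "Inr i"] that by (simp add: J_def)
  have DX: "real_distribution (distr M borel (X 0))" using rvX[OF n0] by simp
  have DY: "real_distribution (distr M borel (Y 0))" using rvY[OF n0] by simp
  have mX: "mono FX" and bX: "(FX \<longlongrightarrow> 0) at_bot" and tX: "(FX \<longlongrightarrow> 1) at_top"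
    using real_distr_props[OF DX] distX[OF n0] by auto
  have mY: "mono FY" and bY: "(FY \<longlongrightarrow> 0) at_bot" and tY: "(FY \<longlongrightarrow> 1) at_top"
    using real_distr_props[OF DY] distY[OF n0] by auto
  have FXm[measurable]: "FX \<in> borel_measurable borel" by (rule borel_measurable_mono[OF mX])
  have FYm[measurable]: "FY \<in> borel_measurable borel" by (rule borel_measurable_mono[OF mY])
  have WL: "W (Inl i) = (\<lambda>\<omega>. FX (X i \<omega>))" for i by (simp add: W_def)
  have WR: "W (Inr i) = (\<lambda>\<omega>. FY (Y i \<omega>))" for i by (simp add: W_def)
  have WLm[measurable]: "W (Inl i) \<in> borel_measurable M" if "i < n" for i
    unfolding WL using rvX[OF that] by measurable
  have WRm[measurable]: "W (Inr i) \<in> borel_measurable M" if "i < n" for i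
    unfolding WR using rvY[OF that] by measurable
  have indW: "indep_vars (\<lambda>_. borel) W J"
  proof -
    have "indep_vars (\<lambda>_. borel) (\<lambda>j x. (case j of Inl _ \<Rightarrow> FX | Inr _ \<Rightarrow> FY) (case_sum X Y j x)) J"
    proof (rule indep_vars_compose2[OF ind[folded J_def]])
      fix j show "(case j of Inl _ \<Rightarrow> FX | Inr _ \<Rightarrow> FY) \<in> borel \<rightarrow>\<^sub>M borel"
        by (cases j) simp_all
    qed
    moreover have "(\<lambda>j x. (case j of Inl _ \<Rightarrow> FX | Inr _ \<Rightarrow> FY) (case_sum X Y j x)) = W"
      by (auto simp: W_def fun_eq_iff split: sum.split)
    ultimately show ?thesis by simp
  qed
  have lawU: "prob {\<omega> \<in> space M. W (Inl i) \<omega> \<le> t} = max 0 (min 1 t)" if "i < n" for i t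
    using law_transform[OF rvX[OF that] distX[OF that] contX] by (simp add: WL)
  have lawV: "prob {\<omega> \<in> space M. W (Inr i) \<omega> \<le> t} = max 0 (min 1 t)" if "i < n" for i t
    using law_transform[OF rvY[OF that] distY[OF that] contY] by (simp add: WR)
  show UF: "unif_family M W Inl n"
  proof unfold_locales
    show "indep_vars (\<lambda>_. borel) W (Inl ` {..<n})"
      by (rule indep_vars_subset[OF indW]) (auto simp: J_def)
  qed (auto simp: lawU)
  show VF: "unif_family M W Inr n"
  proof unfold_locales
    show "indep_vars (\<lambda>_. borel) W (Inr ` {..<n})"
      by (rule indep_vars_subset[OF indW]) (auto simp: J_def)
  qed (auto simp: lawV)
  have cdfU: "cdf (distr M borel (W (Inl i))) = (\<lambda>t. max 0 (min 1 t))" if "i < n" for i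
    using cdf_of_law[OF WLm[OF that]] lawU[OF that] by auto
  have cdfV: "cdf (distr M borel (W (Inr i))) = (\<lambda>t. max 0 (min 1 t))" if "i < n" for i
    using cdf_of_law[OF WRm[OF that]] lawV[OF that] by auto
  define \<mu> where "\<mu> = distr M borel (W (Inl 0))"
  have lawEqU: "distr M borel (W (Inl i)) = \<mu>" if "i < n" for i
    unfolding \<mu>_def by (rule cdf_unique) (use WLm that n0 cdfU in auto)
  have lawEqV: "distr M borel (W (Inr i)) = \<mu>" if "i < n" for i
    unfolding \<mu>_def by (rule cdf_unique) (use WRm that n0 cdfU cdfV in auto)
  define oX where "oX = (\<lambda>\<omega>. order_stat (\<lambda>i. X i \<omega>) n k)"
  define oY where "oY = (\<lambda>\<omega>. order_stat (\<lambda>i. Y i \<omega>) n k)"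
  define oU where "oU = (\<lambda>\<omega>. order_stat (\<lambda>i. W (Inl i) \<omega>) n k)"
  define oV where "oV = (\<lambda>\<omega>. order_stat (\<lambda>i. W (Inr i) \<omega>) n k)"
  have oXm[measurable]: "oX \<in> borel_measurable M" unfolding oX_def by (rule borel_measurable_os[OF rvX k])
  have oYm[measurable]: "oY \<in> borel_measurable M" unfolding oY_def by (rule borel_measurable_os[OF rvY k])
  have oUm[measurable]: "oU \<in> borel_measurable M" unfolding oU_def by (rule borel_measurable_os[OF WLm k])
  have oVm[measurable]: "oV \<in> borel_measurable M" unfolding oV_def by (rule borel_measurable_os[OF WRm k])
  have oUX: "oU \<omega> = FX (oX \<omega>)" for \<omega>
    unfolding oU_def oX_def WL by (rule os_mono[OF mX k])
  have oVY: "oV \<omega> = FY (oY \<omega>)" for \<omega>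
    unfolding oV_def oY_def WR by (rule os_mono[OF mY k])
  have sym: "prob {\<omega> \<in> space M. oV \<omega> \<le> oU \<omega>} = prob {\<omega> \<in> space M. oU \<omega> \<le> oV \<omega>}"
  proof -
    have cs: "case_sum (\<lambda>i. W (Inl i)) (\<lambda>i. W (Inr i)) = W" by (auto simp: fun_eq_iff split: sum.split)
    show ?thesis unfolding oU_def oV_def
      by (rule sym_os[where \<mu>=\<mu>]) (use indW lawEqU lawEqV k in \<open>simp_all add: cs J_def\<close>)
  qed
  have tiesUV: "prob {\<omega> \<in> space M. oU \<omega> = oV \<omega>} = 0"
  proof (rule prob_union_zero'[where I="{..<n} \<times> {..<n}" and A="\<lambda>p. {\<omega> \<in> space M. W (Inl (fst p)) \<omega> = W (Inr (snd p)) \<omega>}"])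
    fix p assume p: "p \<in> {..<n} \<times> {..<n}"
    then have p1: "fst p < n" and p2: "snd p < n" by auto
    show "{\<omega> \<in> space M. W (Inl (fst p)) \<omega> = W (Inr (snd p)) \<omega>} \<in> events"
      using WLm[OF p1] WRm[OF p2] by measurable
    have iv: "indep_var borel (W (Inl (fst p))) borel (W (Inr (snd p)))"
      by (rule indep_var_from_vars[OF indW]) (use p1 p2 in \<open>auto simp: J_def\<close>)
    have "measure (distr M borel (W (Inr (snd p)))) {x} = 0" for x
      by (rule atom_zero) (use WRm[OF p2] cdfV[OF p2] continuous_clamp in auto)
    then show "prob {\<omega> \<in> space M. W (Inl (fst p)) \<omega> = W (Inr (snd p)) \<omega>} = 0"
      by (rule prob_ties_zero[OF iv])
  next
    show "{\<omega> \<in> space M. oU \<omega> = oV \<omega>} \<subseteq> (\<Union>p\<in>{..<n} \<times> {..<n}. {\<omega> \<in> space M. W (Inl (fst p)) \<omega> = W (Inr (snd p)) \<omega>})"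
    proof
      fix \<omega> assume w: "\<omega> \<in> {\<omega> \<in> space M. oU \<omega> = oV \<omega>}"
      obtain i where i: "i < n" "oU \<omega> = W (Inl i) \<omega>" using os_in[OF k, of "\<lambda>i. W (Inl i) \<omega>"] unfolding oU_def by blast
      obtain j where j: "j < n" "oV \<omega> = W (Inr j) \<omega>" using os_in[OF k, of "\<lambda>i. W (Inr i) \<omega>"] unfolding oV_def by blast
      show "\<omega> \<in> (\<Union>p\<in>{..<n} \<times> {..<n}. {\<omega> \<in> space M. W (Inl (fst p)) \<omega> = W (Inr (snd p)) \<omega>})"
        using w i j by (intro UN_I[of "(i, j)"]) auto
    qed
  qed simp
  have tiesXY: "prob {\<omega> \<in> space M. oX \<omega> = oY \<omega>} = 0"
  proof (rule prob_union_zero'[where I="{..<n} \<times> {..<n}" and A="\<lambda>p. {\<omega> \<in> space M. X (fst p) \<omega> = Y (snd p) \<omega>}"])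
    fix p assume p: "p \<in> {..<n} \<times> {..<n}"
    then have p1: "fst p < n" and p2: "snd p < n" by auto
    show "{\<omega> \<in> space M. X (fst p) \<omega> = Y (snd p) \<omega>} \<in> events"
      using rvX[OF p1] rvY[OF p2] by measurable
    have "indep_var borel (case_sum X Y (Inl (fst p))) borel (case_sum X Y (Inr (snd p)))"
      by (rule indep_var_from_vars[OF ind]) (use p1 p2 in auto)
    then have iv: "indep_var borel (X (fst p)) borel (Y (snd p))" by simp
    have "measure (distr M borel (Y (snd p))) {x} = 0" for x
      by (rule atom_zero) (use rvY[OF p2] distY[OF p2] contY in auto)
    then show "prob {\<omega> \<in> space M. X (fst p) \<omega> = Y (snd p) \<omega>} = 0"
      by (rule prob_ties_zero[OF iv])
  next
    show "{\<omega> \<in> space M. oX \<omega> = oY \<omega>} \<subseteq> (\<Union>p\<in>{..<n} \<times> {..<n}. {\<omega> \<in> space M. X (fst p) \<omega> = Y (snd p) \<omega>})"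
    proof
      fix \<omega> assume w: "\<omega> \<in> {\<omega> \<in> space M. oX \<omega> = oY \<omega>}"
      obtain i where i: "i < n" "oX \<omega> = X i \<omega>" using os_in[OF k, of "\<lambda>i. X i \<omega>"] unfolding oX_def by blast
      obtain j where j: "j < n" "oY \<omega> = Y j \<omega>" using os_in[OF k, of "\<lambda>i. Y i \<omega>"] unfolding oY_def by blast
      show "\<omega> \<in> (\<Union>p\<in>{..<n} \<times> {..<n}. {\<omega> \<in> space M. X (fst p) \<omega> = Y (snd p) \<omega>})"
        using w i j by (intro UN_I[of "(i, j)"]) auto
    qed
  qed simp
  have half: "prob {\<omega> \<in> space M. oU \<omega> \<le> oV \<omega>} = 1/2" "prob {\<omega> \<in> space M. oV \<omega> \<le> oU \<omega>} = 1/2"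
  proof -
    have c1: "prob {\<omega> \<in> space M. oV \<omega> < oU \<omega>} = 1 - prob {\<omega> \<in> space M. oU \<omega> \<le> oV \<omega>}"
    proof -
      have "{\<omega> \<in> space M. oV \<omega> < oU \<omega>} = space M - {\<omega> \<in> space M. oU \<omega> \<le> oV \<omega>}" by auto
      then show ?thesis by (simp add: prob_compl)
    qed
    have c2: "prob {\<omega> \<in> space M. oV \<omega> \<le> oU \<omega>} \<le> prob {\<omega> \<in> space M. oV \<omega> < oU \<omega>} + prob {\<omega> \<in> space M. oU \<omega> = oV \<omega>}"
    proof -
      have eq: "{\<omega> \<in> space M. oV \<omega> \<le> oU \<omega>} = {\<omega> \<in> space M. oV \<omega> < oU \<omega>} \<union> {\<omega> \<in> space M. oU \<omega> = oV \<omega>}" by auto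
      have "prob ({\<omega> \<in> space M. oV \<omega> < oU \<omega>} \<union> {\<omega> \<in> space M. oU \<omega> = oV \<omega>}) \<le> prob {\<omega> \<in> space M. oV \<omega> < oU \<omega>} + prob {\<omega> \<in> space M. oU \<omega> = oV \<omega>}"
        by (rule measure_Un_le) measurable
      then show ?thesis using eq by simp
    qed
    have c3: "prob {\<omega> \<in> space M. oV \<omega> < oU \<omega>} \<le> prob {\<omega> \<in> space M. oV \<omega> \<le> oU \<omega>}"
      by (rule finite_measure_mono) auto
    show "prob {\<omega> \<in> space M. oU \<omega> \<le> oV \<omega>} = 1/2" using c1 c2 c3 sym tiesUV by linarith
    then show "prob {\<omega> \<in> space M. oV \<omega> \<le> oU \<omega>} = 1/2" using sym by simp
  qed
  define a where "a = max 0 (\<gamma> - \<delta>)"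
  define b where "b = min 1 (\<gamma> + \<delta>)"
  have inN: "0 < u \<and> u < 1 \<and> \<bar>u - \<gamma>\<bar> < \<delta>" if "\<not> u \<le> a" "\<not> u \<ge> b" for u
    using that by (auto simp: a_def b_def)
  show "(\<forall>u. 0 < u \<and> u < 1 \<and> \<bar>u - \<gamma>\<bar> < \<delta> \<longrightarrow> quantile FX u \<le> quantile FY u) \<longrightarrow>
         prob {\<omega> \<in> space M. order_stat (\<lambda>i. X i \<omega>) n k \<le> order_stat (\<lambda>i. Y i \<omega>) n k} \<ge>
           1/2 - prob {\<omega> \<in> space M. order_stat (\<lambda>i. W (Inr i) \<omega>) n k \<le> max 0 (\<gamma> - \<delta>)}
               - prob {\<omega> \<in> space M. order_stat (\<lambda>i. W (Inr i) \<omega>) n k \<ge> min 1 (\<gamma> + \<delta>)}"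
  proof
    assume q: "\<forall>u. 0 < u \<and> u < 1 \<and> \<bar>u - \<gamma>\<bar> < \<delta> \<longrightarrow> quantile FX u \<le> quantile FY u"
    have sub: "{\<omega> \<in> space M. oY \<omega> < oX \<omega>} \<subseteq>
       {\<omega> \<in> space M. oV \<omega> \<le> oU \<omega>} \<union> ({\<omega> \<in> space M. oV \<omega> \<le> a} \<union> {\<omega> \<in> space M. oV \<omega> \<ge> b})"
    proof
      fix \<omega> assume w: "\<omega> \<in> {\<omega> \<in> space M. oY \<omega> < oX \<omega>}"
      show "\<omega> \<in> {\<omega> \<in> space M. oV \<omega> \<le> oU \<omega>} \<union> ({\<omega> \<in> space M. oV \<omega> \<le> a} \<union> {\<omega> \<in> space M. oV \<omega> \<ge> b})"
      proof (cases "oV \<omega> \<le> a \<or> oV \<omega> \<ge> b")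
        case True then show ?thesis using w by auto
      next
        case False
        then have u: "0 < FY (oY \<omega>)" "FY (oY \<omega>) < 1" "\<bar>FY (oY \<omega>) - \<gamma>\<bar> < \<delta>" using inN[of "oV \<omega>"] oVY by auto
        have "FY (oY \<omega>) \<le> FX (oX \<omega>)"
          by (rule det[OF mX contX bX tX mY contY bY tY]) (use q u w in auto)
        then show ?thesis using w oUX oVY by auto
      qed
    qed
    have "prob {\<omega> \<in> space M. oY \<omega> < oX \<omega>} \<le>
        prob ({\<omega> \<in> space M. oV \<omega> \<le> oU \<omega>} \<union> ({\<omega> \<in> space M. oV \<omega> \<le> a} \<union> {\<omega> \<in> space M. oV \<omega> \<ge> b}))"
      by (rule finite_measure_mono[OF sub]) measurable
    also have "\<dots> \<le> prob {\<omega> \<in> space M. oV \<omega> \<le> oU \<omega>} + prob ({\<omega> \<in> space M. oV \<omega> \<le> a} \<union> {\<omega> \<in> space M. oV \<omega> \<ge> b})"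
      by (rule measure_Un_le) measurable
    also have "\<dots> \<le> prob {\<omega> \<in> space M. oV \<omega> \<le> oU \<omega>} + (prob {\<omega> \<in> space M. oV \<omega> \<le> a} + prob {\<omega> \<in> space M. oV \<omega> \<ge> b})"
      using measure_Un_le[of "{\<omega> \<in> space M. oV \<omega> \<le> a}" M "{\<omega> \<in> space M. oV \<omega> \<ge> b}"] by simp
    finally have E: "prob {\<omega> \<in> space M. oY \<omega> < oX \<omega>} \<le> 1/2 + prob {\<omega> \<in> space M. oV \<omega> \<le> a} + prob {\<omega> \<in> space M. oV \<omega> \<ge> b}"
      using half by simp
    have "prob {\<omega> \<in> space M. oX \<omega> \<le> oY \<omega>} = 1 - prob {\<omega> \<in> space M. oY \<omega> < oX \<omega>}"
    proof -
      have "{\<omega> \<in> space M. oX \<omega> \<le> oY \<omega>} = space M - {\<omega> \<in> space M. oY \<omega> < oX \<omega>}" by auto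
      then show ?thesis by (simp add: prob_compl)
    qed
    then show "prob {\<omega> \<in> space M. order_stat (\<lambda>i. X i \<omega>) n k \<le> order_stat (\<lambda>i. Y i \<omega>) n k} \<ge>
           1/2 - prob {\<omega> \<in> space M. order_stat (\<lambda>i. W (Inr i) \<omega>) n k \<le> max 0 (\<gamma> - \<delta>)}
               - prob {\<omega> \<in> space M. order_stat (\<lambda>i. W (Inr i) \<omega>) n k \<ge> min 1 (\<gamma> + \<delta>)}"
      using E unfolding oX_def oY_def oV_def a_def b_def by linarith
  qed
  show "(\<forall>u. 0 < u \<and> u < 1 \<and> \<bar>u - \<gamma>\<bar> < \<delta> \<longrightarrow> quantile FY u \<le> quantile FX u) \<longrightarrow>
         prob {\<omega> \<in> space M. order_stat (\<lambda>i. X i \<omega>) n k \<le> order_stat (\<lambda>i. Y i \<omega>) n k} \<le>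
           1/2 + prob {\<omega> \<in> space M. order_stat (\<lambda>i. W (Inl i) \<omega>) n k \<le> max 0 (\<gamma> - \<delta>)}
               + prob {\<omega> \<in> space M. order_stat (\<lambda>i. W (Inl i) \<omega>) n k \<ge> min 1 (\<gamma> + \<delta>)}"
  proof
    assume q: "\<forall>u. 0 < u \<and> u < 1 \<and> \<bar>u - \<gamma>\<bar> < \<delta> \<longrightarrow> quantile FY u \<le> quantile FX u"
    have sub: "{\<omega> \<in> space M. oX \<omega> < oY \<omega>} \<subseteq>
       {\<omega> \<in> space M. oU \<omega> \<le> oV \<omega>} \<union> ({\<omega> \<in> space M. oU \<omega> \<le> a} \<union> {\<omega> \<in> space M. oU \<omega> \<ge> b})"
    proof
      fix \<omega> assume w: "\<omega> \<in> {\<omega> \<in> space M. oX \<omega> < oY \<omega>}"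
      show "\<omega> \<in> {\<omega> \<in> space M. oU \<omega> \<le> oV \<omega>} \<union> ({\<omega> \<in> space M. oU \<omega> \<le> a} \<union> {\<omega> \<in> space M. oU \<omega> \<ge> b})"
      proof (cases "oU \<omega> \<le> a \<or> oU \<omega> \<ge> b")
        case True then show ?thesis using w by auto
      next
        case False
        then have u: "0 < FX (oX \<omega>)" "FX (oX \<omega>) < 1" "\<bar>FX (oX \<omega>) - \<gamma>\<bar> < \<delta>" using inN[of "oU \<omega>"] oUX by auto
        have "FX (oX \<omega>) \<le> FY (oY \<omega>)"
          by (rule det[OF mY contY bY tY mX contX bX tX]) (use q u w in auto)
        then show ?thesis using w oUX oVY by auto
      qed
    qed
    have "prob {\<omega> \<in> space M. oX \<omega> < oY \<omega>} \<le>
        prob ({\<omega> \<in> space M. oU \<omega> \<le> oV \<omega>} \<union> ({\<omega> \<in> space M. oU \<omega> \<le> a} \<union> {\<omega> \<in> space M. oU \<omega> \<ge> b}))"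
      by (rule finite_measure_mono[OF sub]) measurable
    also have "\<dots> \<le> prob {\<omega> \<in> space M. oU \<omega> \<le> oV \<omega>} + prob ({\<omega> \<in> space M. oU \<omega> \<le> a} \<union> {\<omega> \<in> space M. oU \<omega> \<ge> b})"
      by (rule measure_Un_le) measurable
    also have "\<dots> \<le> prob {\<omega> \<in> space M. oU \<omega> \<le> oV \<omega>} + (prob {\<omega> \<in> space M. oU \<omega> \<le> a} + prob {\<omega> \<in> space M. oU \<omega> \<ge> b})"
      using measure_Un_le[of "{\<omega> \<in> space M. oU \<omega> \<le> a}" M "{\<omega> \<in> space M. oU \<omega> \<ge> b}"] by simp
    finally have E: "prob {\<omega> \<in> space M. oX \<omega> < oY \<omega>} \<le> 1/2 + prob {\<omega> \<in> space M. oU \<omega> \<le> a} + prob {\<omega> \<in> space M. oU \<omega> \<ge> b}"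
      using half by simp
    have eq: "{\<omega> \<in> space M. oX \<omega> \<le> oY \<omega>} = {\<omega> \<in> space M. oX \<omega> < oY \<omega>} \<union> {\<omega> \<in> space M. oX \<omega> = oY \<omega>}" by auto
    have "prob ({\<omega> \<in> space M. oX \<omega> < oY \<omega>} \<union> {\<omega> \<in> space M. oX \<omega> = oY \<omega>}) \<le> prob {\<omega> \<in> space M. oX \<omega> < oY \<omega>} + prob {\<omega> \<in> space M. oX \<omega> = oY \<omega>}"
      by (rule measure_Un_le) measurable
    then have "prob {\<omega> \<in> space M. oX \<omega> \<le> oY \<omega>} \<le> prob {\<omega> \<in> space M. oX \<omega> < oY \<omega>} + prob {\<omega> \<in> space M. oX \<omega> = oY \<omega>}"
      using eq by simp
    then show "prob {\<omega> \<in> space M. order_stat (\<lambda>i. X i \<omega>) n k \<le> order_stat (\<lambda>i. Y i \<omega>) n k} \<le>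
           1/2 + prob {\<omega> \<in> space M. order_stat (\<lambda>i. W (Inl i) \<omega>) n k \<le> max 0 (\<gamma> - \<delta>)}
               + prob {\<omega> \<in> space M. order_stat (\<lambda>i. W (Inl i) \<omega>) n k \<ge> min 1 (\<gamma> + \<delta>)}"
      using E tiesXY unfolding oX_def oY_def oU_def a_def b_def by linarith
  qed
qed

lemma tail_lim:
  fixes M :: "nat \<Rightarrow> 'a measure" and W :: "nat \<Rightarrow> 'i \<Rightarrow> 'a \<Rightarrow> real" and g :: "nat \<Rightarrow> 'i"
    and \<gamma>s :: "nat \<Rightarrow> real" and \<gamma> :: real
  assumes UF: "\<And>n. n \<ge> 1 \<Longrightarrow> unif_family (M n) (W n) g n"
    and gr: "\<And>n. \<gamma>s n \<in> {0..1}" and g0: "\<gamma> \<in> {0..1}" and lim: "\<gamma>s \<longlonglongrightarrow> \<gamma>"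
  shows "0 \<le> a \<Longrightarrow> a \<le> 1 \<Longrightarrow> a = 0 \<or> a < \<gamma> \<Longrightarrow>
      (\<lambda>n. measure (M n) {\<omega> \<in> space (M n). order_stat (\<lambda>i. W n (g i) \<omega>) n (1 + nat \<lfloor>real (n - 1) * \<gamma>s n\<rfloor>) \<le> a}) \<longlonglongrightarrow> 0"
    and "0 \<le> b \<Longrightarrow> b \<le> 1 \<Longrightarrow> b = 1 \<or> \<gamma> < b \<Longrightarrow>
      (\<lambda>n. measure (M n) {\<omega> \<in> space (M n). order_stat (\<lambda>i. W n (g i) \<omega>) n (1 + nat \<lfloor>real (n - 1) * \<gamma>s n\<rfloor>) \<ge> b}) \<longlonglongrightarrow> 0"
proof -
  define kn where "kn n = 1 + nat \<lfloor>real (n - 1) * \<gamma>s n\<rfloor>" for n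
  have kn: "1 \<le> kn n" "kn n \<le> n" if "n \<ge> 1" for n
    using kk_props(1,2)[OF gr that] unfolding kn_def by auto
  have ev1: "eventually (\<lambda>n. n \<ge> (1::nat)) sequentially" by (rule eventually_ge_at_top)
  {
    assume a: "0 \<le> a" "a \<le> 1" "a = 0 \<or> a < \<gamma>"
    show "(\<lambda>n. measure (M n) {\<omega> \<in> space (M n). order_stat (\<lambda>i. W n (g i) \<omega>) n (1 + nat \<lfloor>real (n - 1) * \<gamma>s n\<rfloor>) \<le> a}) \<longlonglongrightarrow> 0"
    proof (cases "a = 0")
      case True
      show ?thesis
      proof (rule tendsto_eventually)
        show "eventually (\<lambda>n. measure (M n) {\<omega> \<in> space (M n). order_stat (\<lambda>i. W n (g i) \<omega>) n (1 + nat \<lfloor>real (n - 1) * \<gamma>s n\<rfloor>) \<le> a} = 0) sequentially"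
          using ev1
        proof eventually_elim
          case (elim n)
          show ?case using unif_family.os_le0[OF UF[OF elim] kn[OF elim]] True unfolding kn_def by simp
        qed
      qed
    next
      case False
      then have aa: "a < \<gamma>" using a by simp
      obtain c where c: "c > 0" and evc: "eventually (\<lambda>n. real (1 + nat \<lfloor>real (n - 1) * \<gamma>s n\<rfloor>) \<ge> real n * a + c * real n) sequentially"
        using kk_lower[OF gr lim aa] by blast
      show ?thesis
      proof (rule exp_bound_lim[OF c])
        show "\<And>n. 0 \<le> measure (M n) {\<omega> \<in> space (M n). order_stat (\<lambda>i. W n (g i) \<omega>) n (1 + nat \<lfloor>real (n - 1) * \<gamma>s n\<rfloor>) \<le> a}"
          by (rule measure_nonneg)
        show "eventually (\<lambda>n. \<exists>\<epsilon>\<ge>c * real n. measure (M n) {\<omega> \<in> space (M n). order_stat (\<lambda>i. W n (g i) \<omega>) n (1 + nat \<lfloor>real (n - 1) * \<gamma>s n\<rfloor>) \<le> a} \<le> exp (- 2 * \<epsilon>\<^sup>2 / real n)) sequentially"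
          using ev1 evc
        proof eventually_elim
          case (elim n)
          define \<epsilon> where "\<epsilon> = real (kn n) - real n * a"
          have e: "\<epsilon> \<ge> c * real n" using elim(2) unfolding \<epsilon>_def kn_def by simp
          have e0: "\<epsilon> \<ge> 0" using e c by (meson order_trans mult_nonneg_nonneg of_nat_0_le_iff less_imp_le)
          have "measure (M n) {\<omega> \<in> space (M n). order_stat (\<lambda>i. W n (g i) \<omega>) n (kn n) \<le> a} \<le> exp (- 2 * \<epsilon>\<^sup>2 / real n)"
            by (rule unif_family.os_tail_le[OF UF[OF elim(1)] kn[OF elim(1)] a(1,2) e0]) (simp add: \<epsilon>_def)
          then show ?case using e unfolding kn_def by blast
        qed
      qed
    qed
  }
  {
    assume b: "0 \<le> b" "b \<le> 1" "b = 1 \<or> \<gamma> < b"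
    show "(\<lambda>n. measure (M n) {\<omega> \<in> space (M n). order_stat (\<lambda>i. W n (g i) \<omega>) n (1 + nat \<lfloor>real (n - 1) * \<gamma>s n\<rfloor>) \<ge> b}) \<longlonglongrightarrow> 0"
    proof (cases "b = 1")
      case True
      show ?thesis
      proof (rule tendsto_eventually)
        show "eventually (\<lambda>n. measure (M n) {\<omega> \<in> space (M n). order_stat (\<lambda>i. W n (g i) \<omega>) n (1 + nat \<lfloor>real (n - 1) * \<gamma>s n\<rfloor>) \<ge> b} = 0) sequentially"
          using ev1
        proof eventually_elim
          case (elim n)
          show ?case using unif_family.os_ge1[OF UF[OF elim] kn[OF elim]] True unfolding kn_def by simp
        qed
      qed
    next
      case False
      then have bb: "\<gamma> < b" using b by simp
      define b' where "b' = (\<gamma> + b) / 2"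
      have b': "\<gamma> < b'" "b' < b" "0 \<le> b'" "b' \<le> 1" using bb g0 b by (auto simp: b'_def)
      obtain c where c: "c > 0" and evc: "eventually (\<lambda>n. real (1 + nat \<lfloor>real (n - 1) * \<gamma>s n\<rfloor>) - 1 \<le> real n * b' - c * real n) sequentially"
        using kk_upper[OF gr lim b'(1)] by blast
      show ?thesis
      proof (rule exp_bound_lim[OF c])
        show "\<And>n. 0 \<le> measure (M n) {\<omega> \<in> space (M n). order_stat (\<lambda>i. W n (g i) \<omega>) n (1 + nat \<lfloor>real (n - 1) * \<gamma>s n\<rfloor>) \<ge> b}"
          by (rule measure_nonneg)
        show "eventually (\<lambda>n. \<exists>\<epsilon>\<ge>c * real n. measure (M n) {\<omega> \<in> space (M n). order_stat (\<lambda>i. W n (g i) \<omega>) n (1 + nat \<lfloor>real (n - 1) * \<gamma>s n\<rfloor>) \<ge> b} \<le> exp (- 2 * \<epsilon>\<^sup>2 / real n)) sequentially"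
          using ev1 evc
        proof eventually_elim
          case (elim n)
          interpret UFn: unif_family "M n" "W n" g n by (rule UF[OF elim(1)])
          define \<epsilon> where "\<epsilon> = real n * b' - (real (kn n) - 1)"
          have e: "\<epsilon> \<ge> c * real n" using elim(2) unfolding \<epsilon>_def kn_def by simp
          have e0: "\<epsilon> \<ge> 0" using e c by (meson order_trans mult_nonneg_nonneg of_nat_0_le_iff less_imp_le)
          have osm: "(\<lambda>\<omega>. order_stat (\<lambda>i. W n (g i) \<omega>) n (kn n)) \<in> borel_measurable (M n)"
            by (rule borel_measurable_os[OF UFn.rvW kn[OF elim(1)]])
          have "measure (M n) {\<omega> \<in> space (M n). order_stat (\<lambda>i. W n (g i) \<omega>) n (kn n) \<ge> b}
              \<le> measure (M n) {\<omega> \<in> space (M n). order_stat (\<lambda>i. W n (g i) \<omega>) n (kn n) > b'}"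
            by (rule UFn.finite_measure_mono) (use b'(2) osm in \<open>auto\<close>)
          also have "\<dots> \<le> exp (- 2 * \<epsilon>\<^sup>2 / real n)"
            by (rule UFn.os_tail_gt[OF kn[OF elim(1)] b'(3,4) e0]) (simp add: \<epsilon>_def)
          finally show ?case using e unfolding kn_def by blast
        qed
      qed
    qed
  }
qed

theorem theorem3p13:
  fixes M :: "nat \<Rightarrow> 'a measure"
    and X Y :: "nat \<Rightarrow> nat \<Rightarrow> 'a \<Rightarrow> real"
    and FX FY :: "real \<Rightarrow> real"
    and \<gamma>s :: "nat \<Rightarrow> real" and \<gamma> :: real
  assumes prob: "\<And>n. prob_space (M n)"
    and indep: "\<And>n. prob_space.indep_vars (M n) (\<lambda>_. borel)
                  (case_sum (X n) (Y n)) ({..<n} <+> {..<n})"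
    and distX: "\<And>n i. i < n \<Longrightarrow> cdf (distr (M n) borel (X n i)) = FX"
    and distY: "\<And>n i. i < n \<Longrightarrow> cdf (distr (M n) borel (Y n i)) = FY"
    and contX: "continuous_on UNIV FX"
    and contY: "continuous_on UNIV FY"
    and \<gamma>s_range: "\<And>n. \<gamma>s n \<in> {0..1}"
    and \<gamma>_range: "\<gamma> \<in> {0..1}"
    and rate: "(\<lambda>n. \<gamma>s n - \<gamma>) \<in> O(\<lambda>n. 1 / real n)"
  defines "P \<equiv> (\<lambda>n. measure (M n) {\<omega> \<in> space (M n).
              order_stat (\<lambda>i. X n i \<omega>) n (1 + nat \<lfloor>real (n - 1) * \<gamma>s n\<rfloor>) \<le> order_stat (\<lambda>i. Y n i \<omega>) n (1 + nat \<lfloor>real (n - 1) * \<gamma>s n\<rfloor>)})"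
  shows "(dist_pos \<gamma> (A0 FX FY) \<longrightarrow> liminf (\<lambda>n. ereal (P n)) \<ge> ereal (1/2))
       \<and> (dist_pos \<gamma> (A2 FX FY) \<longrightarrow> P \<longlonglongrightarrow> 1/2)"
proof -
  have lim: "\<gamma>s \<longlonglongrightarrow> \<gamma>" by (rule gs_lim[OF rate])
  define kn where "kn n = 1 + nat \<lfloor>real (n - 1) * \<gamma>s n\<rfloor>" for n
  have kn: "1 \<le> kn n" "kn n \<le> n" if "n \<ge> 1" for n
    using kk_props(1,2)[OF \<gamma>s_range that] unfolding kn_def by auto
  define W where "W n = (\<lambda>j \<omega>. case j of Inl i \<Rightarrow> FX (X n i \<omega>) | Inr i \<Rightarrow> FY (Y n i \<omega>))" for n
  have mn: "unif_family (M n) (W n) Inl n \<and> unif_family (M n) (W n) Inr n \<and>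
     ((\<forall>u. 0 < u \<and> u < 1 \<and> \<bar>u - \<gamma>\<bar> < \<delta> \<longrightarrow> quantile FX u \<le> quantile FY u) \<longrightarrow>
         P n \<ge> 1/2 - measure (M n) {\<omega> \<in> space (M n). order_stat (\<lambda>i. W n (Inr i) \<omega>) n (kn n) \<le> max 0 (\<gamma> - \<delta>)}
               - measure (M n) {\<omega> \<in> space (M n). order_stat (\<lambda>i. W n (Inr i) \<omega>) n (kn n) \<ge> min 1 (\<gamma> + \<delta>)}) \<and>
     ((\<forall>u. 0 < u \<and> u < 1 \<and> \<bar>u - \<gamma>\<bar> < \<delta> \<longrightarrow> quantile FY u \<le> quantile FX u) \<longrightarrow>
         P n \<le> 1/2 + measure (M n) {\<omega> \<in> space (M n). order_stat (\<lambda>i. W n (Inl i) \<omega>) n (kn n) \<le> max 0 (\<gamma> - \<delta>)}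
               + measure (M n) {\<omega> \<in> space (M n). order_stat (\<lambda>i. W n (Inl i) \<omega>) n (kn n) \<ge> min 1 (\<gamma> + \<delta>)})"
    if n: "n \<ge> 1" for n \<delta>
    using prob_space.main_n(1,2)[OF prob indep distX[where n=n] distY[where n=n] contX contY kn[OF n]]
      prob_space.main_n(3,4)[OF prob indep distX[where n=n] distY[where n=n] contX contY kn[OF n], where \<gamma>=\<gamma> and \<delta>=\<delta>]
    unfolding P_def kn_def W_def by blast
  have UL: "unif_family (M n) (W n) Inl n" and UR: "unif_family (M n) (W n) Inr n" if "n \<ge> 1" for n
    using mn[OF that, of 0] by blast+
  have g0: "0 \<le> \<gamma>" "\<gamma> \<le> 1" using \<gamma>_range by auto
  have tL1: "(\<lambda>n. measure (M n) {\<omega> \<in> space (M n). order_stat (\<lambda>i. W n (Inl i) \<omega>) n (kn n) \<le> a}) \<longlonglongrightarrow> 0"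
    if "0 \<le> a" "a \<le> 1" "a = 0 \<or> a < \<gamma>" for a
    unfolding kn_def by (rule tail_lim(1)[where M=M and W=W and g=Inl]) (use UL \<gamma>s_range \<gamma>_range lim that in auto)
  have tL2: "(\<lambda>n. measure (M n) {\<omega> \<in> space (M n). order_stat (\<lambda>i. W n (Inl i) \<omega>) n (kn n) \<ge> b}) \<longlonglongrightarrow> 0"
    if "0 \<le> b" "b \<le> 1" "b = 1 \<or> \<gamma> < b" for b
    unfolding kn_def by (rule tail_lim(2)[where M=M and W=W and g=Inl]) (use UL \<gamma>s_range \<gamma>_range lim that in auto)
  have tR1: "(\<lambda>n. measure (M n) {\<omega> \<in> space (M n). order_stat (\<lambda>i. W n (Inr i) \<omega>) n (kn n) \<le> a}) \<longlonglongrightarrow> 0"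
    if "0 \<le> a" "a \<le> 1" "a = 0 \<or> a < \<gamma>" for a
    unfolding kn_def by (rule tail_lim(1)[where M=M and W=W and g=Inr]) (use UR \<gamma>s_range \<gamma>_range lim that in auto)
  have tR2: "(\<lambda>n. measure (M n) {\<omega> \<in> space (M n). order_stat (\<lambda>i. W n (Inr i) \<omega>) n (kn n) \<ge> b}) \<longlonglongrightarrow> 0"
    if "0 \<le> b" "b \<le> 1" "b = 1 \<or> \<gamma> < b" for b
    unfolding kn_def by (rule tail_lim(2)[where M=M and W=W and g=Inr]) (use UR \<gamma>s_range \<gamma>_range lim that in auto)
  have ev1: "eventually (\<lambda>n. n \<ge> (1::nat)) sequentially" by (rule eventually_ge_at_top)
  have ab: "0 \<le> max 0 (\<gamma> - \<delta>)" "max 0 (\<gamma> - \<delta>) \<le> 1" "max 0 (\<gamma> - \<delta>) = 0 \<or> max 0 (\<gamma> - \<delta>) < \<gamma>"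
     "0 \<le> min 1 (\<gamma> + \<delta>)" "min 1 (\<gamma> + \<delta>) \<le> 1" "min 1 (\<gamma> + \<delta>) = 1 \<or> \<gamma> < min 1 (\<gamma> + \<delta>)"
    if "\<delta> > 0" for \<delta> using that g0 by auto
  have getdelta: "\<exists>\<delta>>0. \<forall>u. 0 < u \<and> u < 1 \<and> \<bar>u - \<gamma>\<bar> < \<delta> \<longrightarrow> u \<notin> A"
    if "dist_pos \<gamma> A" for A
  proof (cases "A = {}")
    case True then show ?thesis by (intro exI[of _ 1]) simp
  next
    case False
    then have pos: "infdist \<gamma> A > 0" using that unfolding dist_pos_def by simp
    show ?thesis
    proof (intro exI[of _ "infdist \<gamma> A"] conjI allI impI pos)
      fix u assume u: "0 < u \<and> u < 1 \<and> \<bar>u - \<gamma>\<bar> < infdist \<gamma> A"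
      show "u \<notin> A"
      proof
        assume "u \<in> A"
        then have "infdist \<gamma> A \<le> dist \<gamma> u" by (rule infdist_le)
        then show False using u by (simp add: dist_real_def abs_minus_commute)
      qed
    qed
  qed
  show ?thesis
  proof (intro conjI impI)
    assume "dist_pos \<gamma> (A0 FX FY)"
    then obtain \<delta> where d: "\<delta> > 0" and dA: "\<forall>u. 0 < u \<and> u < 1 \<and> \<bar>u - \<gamma>\<bar> < \<delta> \<longrightarrow> u \<notin> A0 FX FY"
      using getdelta by blast
    have q: "\<forall>u. 0 < u \<and> u < 1 \<and> \<bar>u - \<gamma>\<bar> < \<delta> \<longrightarrow> quantile FX u \<le> quantile FY u"
      using dA by (auto simp: A0_def not_less)
    define e where "e n = measure (M n) {\<omega> \<in> space (M n). order_stat (\<lambda>i. W n (Inr i) \<omega>) n (kn n) \<le> max 0 (\<gamma> - \<delta>)}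
               + measure (M n) {\<omega> \<in> space (M n). order_stat (\<lambda>i. W n (Inr i) \<omega>) n (kn n) \<ge> min 1 (\<gamma> + \<delta>)}" for n
    have e0: "e \<longlonglongrightarrow> 0" unfolding e_def
      using tendsto_add[OF tR1[OF ab(1-3)[OF d]] tR2[OF ab(4-6)[OF d]]] by simp
    have lo: "eventually (\<lambda>n. ereal (1/2 - e n) \<le> ereal (P n)) sequentially"
      using ev1
    proof eventually_elim
      case (elim n)
      have "P n \<ge> 1/2 - measure (M n) {\<omega> \<in> space (M n). order_stat (\<lambda>i. W n (Inr i) \<omega>) n (kn n) \<le> max 0 (\<gamma> - \<delta>)}
               - measure (M n) {\<omega> \<in> space (M n). order_stat (\<lambda>i. W n (Inr i) \<omega>) n (kn n) \<ge> min 1 (\<gamma> + \<delta>)}"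
        using mn[OF elim, where \<delta>=\<delta>] q by blast
      then show ?case by (simp add: e_def algebra_simps)
    qed
    have "(\<lambda>n. ereal (1/2 - e n)) \<longlonglongrightarrow> ereal (1/2)"
      using tendsto_diff[OF tendsto_const e0, of "1/2"] by (simp add: lim_ereal)
    then have "liminf (\<lambda>n. ereal (1/2 - e n)) = ereal (1/2)" by (rule lim_imp_Liminf[OF trivial_limit_sequentially])
    moreover have "liminf (\<lambda>n. ereal (1/2 - e n)) \<le> liminf (\<lambda>n. ereal (P n))" by (rule Liminf_mono[OF lo])
    ultimately show "liminf (\<lambda>n. ereal (P n)) \<ge> ereal (1/2)" by simp
  next
    assume "dist_pos \<gamma> (A2 FX FY)"
    then obtain \<delta> where d: "\<delta> > 0" and dA: "\<forall>u. 0 < u \<and> u < 1 \<and> \<bar>u - \<gamma>\<bar> < \<delta> \<longrightarrow> u \<notin> A2 FX FY"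
      using getdelta by blast
    have q: "\<forall>u. 0 < u \<and> u < 1 \<and> \<bar>u - \<gamma>\<bar> < \<delta> \<longrightarrow> quantile FX u \<le> quantile FY u"
      using dA by (auto simp: A2_def)
    have q': "\<forall>u. 0 < u \<and> u < 1 \<and> \<bar>u - \<gamma>\<bar> < \<delta> \<longrightarrow> quantile FY u \<le> quantile FX u"
      using dA by (auto simp: A2_def)
    define e where "e n = measure (M n) {\<omega> \<in> space (M n). order_stat (\<lambda>i. W n (Inr i) \<omega>) n (kn n) \<le> max 0 (\<gamma> - \<delta>)}
               + measure (M n) {\<omega> \<in> space (M n). order_stat (\<lambda>i. W n (Inr i) \<omega>) n (kn n) \<ge> min 1 (\<gamma> + \<delta>)}" for n
    define e' where "e' n = measure (M n) {\<omega> \<in> space (M n). order_stat (\<lambda>i. W n (Inl i) \<omega>) n (kn n) \<le> max 0 (\<gamma> - \<delta>)}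
               + measure (M n) {\<omega> \<in> space (M n). order_stat (\<lambda>i. W n (Inl i) \<omega>) n (kn n) \<ge> min 1 (\<gamma> + \<delta>)}" for n
    have e0: "e \<longlonglongrightarrow> 0" unfolding e_def
      using tendsto_add[OF tR1[OF ab(1-3)[OF d]] tR2[OF ab(4-6)[OF d]]] by simp
    have e0': "e' \<longlonglongrightarrow> 0" unfolding e'_def
      using tendsto_add[OF tL1[OF ab(1-3)[OF d]] tL2[OF ab(4-6)[OF d]]] by simp
    show "P \<longlonglongrightarrow> 1/2"
    proof (rule tendsto_sandwich[of "\<lambda>n. 1/2 - e n" P sequentially "\<lambda>n. 1/2 + e' n"])
      show "eventually (\<lambda>n. 1/2 - e n \<le> P n) sequentially"
        using ev1
      proof eventually_elim
        case (elim n)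
        have "P n \<ge> 1/2 - measure (M n) {\<omega> \<in> space (M n). order_stat (\<lambda>i. W n (Inr i) \<omega>) n (kn n) \<le> max 0 (\<gamma> - \<delta>)}
               - measure (M n) {\<omega> \<in> space (M n). order_stat (\<lambda>i. W n (Inr i) \<omega>) n (kn n) \<ge> min 1 (\<gamma> + \<delta>)}"
          using mn[OF elim, where \<delta>=\<delta>] q by blast
        then show ?case by (simp add: e_def algebra_simps)
      qed
      show "eventually (\<lambda>n. P n \<le> 1/2 + e' n) sequentially"
        using ev1
      proof eventually_elim
        case (elim n)
        have "P n \<le> 1/2 + measure (M n) {\<omega> \<in> space (M n). order_stat (\<lambda>i. W n (Inl i) \<omega>) n (kn n) \<le> max 0 (\<gamma> - \<delta>)}
               + measure (M n) {\<omega> \<in> space (M n). order_stat (\<lambda>i. W n (Inl i) \<omega>) n (kn n) \<ge> min 1 (\<gamma> + \<delta>)}"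
          using mn[OF elim, where \<delta>=\<delta>] q' by blast
        then show ?case by (simp add: e'_def algebra_simps)
      qed
      show "(\<lambda>n. 1/2 - e n) \<longlonglongrightarrow> 1/2" using tendsto_diff[OF tendsto_const e0, of "1/2"] by simp
      show "(\<lambda>n. 1/2 + e' n) \<longlonglongrightarrow> 1/2" using tendsto_add[OF tendsto_const e0', of "1/2"] by simp
    qed
  qed
qed

end
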